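(* Let $V\in\mathrm{Der}[[\mathbb{C}^n,0]]$ and let $\rho:\mathbb{R}\to\mathrm{Diff}[[\mathbb{C}^n,0]]$ be given by $\rho(t)=e^{tV}$. Let $\lambda_1,\dots,\lambda_n$ be the spectrum (eigenvalues with multiplicity) of the linear part of $V$. Then every matrix coefficient of $\rho$, viewed as a function of $t\in\mathbb{R}$, belongs to the ring $\mathbb{C}[e^{\lambda_1t},\dots,e^{\lambda_nt},t]$.
   Context: $\mathrm{Der}[[\mathbb{C}^n,0]]$ is the Lie algebra of $\mathbb{C}$-linear derivations of $\mathbb{C}[[x_1,\dots,x_n]]$ preserving the maximal ideal $\mathfrak m$; its linear part is the induced linear map on $\mathfrak m/\mathfrak m^2$. $e^{tV}=\sum_k t^kV^k/k!$ is an element of the group $\mathrm{Diff}[[\mathbb{C}^n,0]]$ of $\mathbb{C}$-algebra automorphisms of $\mathbb{C}[[x]]$ preserving $\mathfrak m$. For multi-indices $\alpha,\beta\in\mathbb{N}^n$, the matrix coefficient $\rho_{\alpha,\beta}(t)$ is the coefficient of the monomial $x^\beta$ in $\rho(t)(x^\alpha)$. *)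

theory Defs
  imports "HOL-Analysis.Analysis" "HOL-Computational_Algebra.Polynomial"
begin

text \<open>Formal power series in variables indexed by a finite type 'n:
  a series is its coefficient function on multi-indices.\<close>
type_synonym 'n mfps = "('n \<Rightarrow> nat) \<Rightarrow> complex"

definition mfps_mult :: "'n::finite mfps \<Rightarrow> 'n mfps \<Rightarrow> 'n mfps" where
  "mfps_mult f g = (\<lambda>\<gamma>. \<Sum>\<alpha>\<in>{\<alpha>. \<forall>i. \<alpha> i \<le> \<gamma> i}. f \<alpha> * g (\<lambda>i. \<gamma> i - \<alpha> i))"

definition mono :: "('n \<Rightarrow> nat) \<Rightarrow> 'n mfps" where
  "mono \<alpha> = (\<lambda>\<beta>. if \<beta> = \<alpha> then 1 else 0)"

definition coord :: "'n \<Rightarrow> 'n mfps" where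
  "coord i = mono (\<lambda>j. if j = i then 1 else 0)"

definition is_der0 :: "('n::finite mfps \<Rightarrow> 'n mfps) \<Rightarrow> bool" where
  "is_der0 D \<longleftrightarrow>
     (\<forall>f g. D (\<lambda>\<beta>. f \<beta> + g \<beta>) = (\<lambda>\<beta>. D f \<beta> + D g \<beta>)) \<and>
     (\<forall>c f. D (\<lambda>\<beta>. c * f \<beta>) = (\<lambda>\<beta>. c * D f \<beta>)) \<and>
     (\<forall>f g. D (mfps_mult f g) = (\<lambda>\<beta>. mfps_mult (D f) g \<beta> + mfps_mult f (D g) \<beta>)) \<and>
     (\<forall>f. f (\<lambda>_. 0) = 0 \<longrightarrow> D f (\<lambda>_. 0) = 0)"

text \<open>Matrix of the linear part: entry (i,j) is the coefficient of x_j in D(x_i)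
  (transpose of the matrix of the induced map on m/m^2; same characteristic polynomial).\<close>
definition linear_part :: "('n::finite mfps \<Rightarrow> 'n mfps) \<Rightarrow> complex^'n^'n" where
  "linear_part D = (\<chi> i j. D (coord i) (\<lambda>k. if k = j then 1 else 0))"

definition charpoly_cart :: "'a::comm_ring_1^'n::finite^'n \<Rightarrow> 'a poly" where
  "charpoly_cart A = det (\<chi> i j. (if i = j then [:0, 1:] else 0) - [:A $ i $ j:])"

definition mat_coeff :: "('n::finite mfps \<Rightarrow> 'n mfps) \<Rightarrow> ('n \<Rightarrow> nat) \<Rightarrow> ('n \<Rightarrow> nat) \<Rightarrow> real \<Rightarrow> complex" where
  "mat_coeff V \<alpha> \<beta> t = (\<Sum>k. complex_of_real t ^ k / of_nat (fact k) * (V ^^ k) (mono \<alpha>) \<beta>)"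

definition exp_poly_ring :: "('n::finite \<Rightarrow> complex) \<Rightarrow> (real \<Rightarrow> complex) set" where
  "exp_poly_ring lam = {f. \<exists>P c. finite (P :: (nat \<times> ('n \<Rightarrow> nat)) set) \<and>
      (\<forall>t. f t = (\<Sum>(m, k)\<in>P. c (m, k) * complex_of_real t ^ m *
                    (\<Prod>i\<in>UNIV. exp (lam i * complex_of_real t) ^ k i)))}"

end

theory Submission
  imports Defs
begin

definition gen :: "nat \<Rightarrow> complex \<Rightarrow> nat \<Rightarrow> complex" where
  "gen m \<mu> k = of_nat (k choose m) * \<mu> ^ (k - m)"

definition sh :: "complex \<Rightarrow> (nat \<Rightarrow> complex) \<Rightarrow> nat \<Rightarrow> complex" where
  "sh \<mu> a = (\<lambda>k. a (Suc k) - \<mu> * a k)"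

inductive_set Sp :: "complex set \<Rightarrow> (nat \<Rightarrow> complex) set" for M where
  Sp0: "(\<lambda>_. 0) \<in> Sp M"
| SpI: "a \<in> Sp M \<Longrightarrow> \<mu> \<in> M \<Longrightarrow> (\<lambda>k. a k + c * gen m \<mu> k) \<in> Sp M"

lemma Sp_add: assumes A: "a \<in> Sp M" shows "b \<in> Sp M \<Longrightarrow> (\<lambda>k. a k + b k) \<in> Sp M"
proof (induction b rule: Sp.induct)
  case Sp0 then show ?case using A by simp
next
  case (SpI b \<mu> c m)
  have "(\<lambda>k. (\<lambda>k. a k + b k) k + c * gen m \<mu> k) \<in> Sp M" using SpI by (intro Sp.SpI) auto
  then show ?case by (simp add: add.assoc)
qed

lemma Sp_smult: "a \<in> Sp M \<Longrightarrow> (\<lambda>k. d * a k) \<in> Sp M"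
proof (induction a rule: Sp.induct)
  case Sp0 then show ?case by (simp add: Sp.Sp0)
next
  case (SpI b \<mu> c m)
  have "(\<lambda>k. (\<lambda>k. d * b k) k + (d*c) * gen m \<mu> k) \<in> Sp M" using SpI by (intro Sp.SpI) auto
  then show ?case by (simp add: algebra_simps)
qed

lemma Sp_gen: "\<mu> \<in> M \<Longrightarrow> (\<lambda>k. c * gen m \<mu> k) \<in> Sp M"
  using Sp.SpI[OF Sp.Sp0, of \<mu> M c m] by simp

lemma Sp_diff: "a \<in> Sp M \<Longrightarrow> b \<in> Sp M \<Longrightarrow> (\<lambda>k. a k - b k) \<in> Sp M"
  using Sp_add[of a M "\<lambda>k. (-1) * b k"] Sp_smult[of b M "-1"] by simp

lemma sh_gen0: "sh \<nu> (gen 0 \<mu>) = (\<lambda>k. (\<mu> - \<nu>) * gen 0 \<mu> k)"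
  by (simp add: sh_def gen_def fun_eq_iff algebra_simps)

lemma sh_genS: "sh \<nu> (gen (Suc m) \<mu>) = (\<lambda>k. gen m \<mu> k + (\<mu> - \<nu>) * gen (Suc m) \<mu> k)"
proof (rule ext)
  fix k
  show "sh \<nu> (gen (Suc m) \<mu>) k = gen m \<mu> k + (\<mu> - \<nu>) * gen (Suc m) \<mu> k"
  proof (cases "m \<le> k")
    case True
    then have e: "Suc k - Suc m = k - m" by simp
    have "sh \<nu> (gen (Suc m) \<mu>) k = of_nat (Suc k choose Suc m) * \<mu>^(k-m) - \<nu> * (of_nat (k choose Suc m) * \<mu> ^ (k - Suc m))"
      by (simp add: sh_def gen_def e)
    also have "of_nat (Suc k choose Suc m) = (of_nat (k choose m) + of_nat (k choose Suc m) :: complex)"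
      by simp
    finally have 1: "sh \<nu> (gen (Suc m) \<mu>) k = of_nat (k choose m) * \<mu>^(k-m) + of_nat (k choose Suc m) * (\<mu>^(k-m) - \<nu> * \<mu> ^ (k - Suc m))"
      by (simp add: algebra_simps)
    show ?thesis
    proof (cases "m = k")
      case True then show ?thesis using 1 by (simp add: gen_def)
    next
      case False
      then have "\<mu>^(k-m) = \<mu> * \<mu> ^ (k - Suc m)" using \<open>m \<le> k\<close>
        by (metis Suc_diff_Suc le_neq_implies_less power_Suc)
      then show ?thesis using 1 by (simp add: gen_def algebra_simps)
    qed
  next
    case False
    then show ?thesis by (simp add: sh_def gen_def binomial_eq_0 algebra_simps)
  qed
qed

lemma sh_add: "sh \<nu> (\<lambda>k. a k + b k) = (\<lambda>k. sh \<nu> a k + sh \<nu> b k)"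
  by (simp add: sh_def fun_eq_iff algebra_simps)
lemma sh_smult: "sh \<nu> (\<lambda>k. d * a k) = (\<lambda>k. d * sh \<nu> a k)"
  by (simp add: sh_def fun_eq_iff algebra_simps)

definition "Pre M \<nu> = {a. \<exists>b\<in>Sp M. sh \<nu> b = a}"

lemma PreI: "b \<in> Sp M \<Longrightarrow> sh \<nu> b = a \<Longrightarrow> a \<in> Pre M \<nu>"
  unfolding Pre_def by blast

lemma Pre_add: "a \<in> Pre M \<nu> \<Longrightarrow> b \<in> Pre M \<nu> \<Longrightarrow> (\<lambda>k. a k + b k) \<in> Pre M \<nu>"
  unfolding Pre_def using Sp_add sh_add by blast
lemma Pre_smult: "a \<in> Pre M \<nu> \<Longrightarrow> (\<lambda>k. d * a k) \<in> Pre M \<nu>"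
  unfolding Pre_def using Sp_smult sh_smult by blast

lemma Pre_gen:
  assumes "\<mu> \<in> M" "\<nu> \<in> M"
  shows "gen m \<mu> \<in> Pre M \<nu>"
proof (cases "\<mu> = \<nu>")
  case True
  have "sh \<nu> (gen (Suc m) \<mu>) = gen m \<mu>" using True by (simp add: sh_genS)
  moreover have "gen (Suc m) \<mu> \<in> Sp M" using Sp_gen[OF assms(1), of 1 "Suc m"] by simp
  ultimately show ?thesis using PreI by blast
next
  case False
  show ?thesis
  proof (induction m)
    case 0
    have "(\<lambda>k. (1/(\<mu>-\<nu>)) * gen 0 \<mu> k) \<in> Sp M" using Sp_gen assms by blast
    moreover have "sh \<nu> (\<lambda>k. (1/(\<mu>-\<nu>)) * gen 0 \<mu> k) = gen 0 \<mu>"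
      unfolding sh_smult[of _ "1/(\<mu>-\<nu>)" "gen 0 \<mu>"] sh_gen0 using False by (simp add: fun_eq_iff)
    ultimately show ?case by (rule PreI)
  next
    case (Suc m)
    have "(\<lambda>k. (1/(\<mu>-\<nu>)) * gen (Suc m) \<mu> k) \<in> Sp M" using Sp_gen assms by blast
    moreover have "sh \<nu> (\<lambda>k. (1/(\<mu>-\<nu>)) * gen (Suc m) \<mu> k) = (\<lambda>k. (1/(\<mu>-\<nu>)) * gen m \<mu> k + gen (Suc m) \<mu> k)"
      unfolding sh_smult[of _ "1/(\<mu>-\<nu>)" "gen (Suc m) \<mu>"] sh_genS using False
      by (simp add: fun_eq_iff distrib_left)
    ultimately have 1: "(\<lambda>k. (1/(\<mu>-\<nu>)) * gen m \<mu> k + gen (Suc m) \<mu> k) \<in> Pre M \<nu>"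
      by (rule PreI)
    have 2: "(\<lambda>k. (-(1/(\<mu>-\<nu>))) * gen m \<mu> k) \<in> Pre M \<nu>" using Pre_smult[OF Suc] .
    have 3: "(\<lambda>k. (\<lambda>k. (1/(\<mu>-\<nu>)) * gen m \<mu> k + gen (Suc m) \<mu> k) k + (\<lambda>k. (-(1/(\<mu>-\<nu>))) * gen m \<mu> k) k) = gen (Suc m) \<mu>"
      by (rule ext) simp
    from Pre_add[OF 1 2] show ?case unfolding 3 .
  qed
qed

lemma Sp_Pre: "a \<in> Sp M \<Longrightarrow> \<nu> \<in> M \<Longrightarrow> a \<in> Pre M \<nu>"
proof (induction a rule: Sp.induct)
  case Sp0
  have "sh \<nu> (\<lambda>_. 0) = (\<lambda>_. 0)" by (simp add: sh_def)
  then show ?case by (rule PreI[OF Sp.Sp0])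
next
  case (SpI a \<mu> c m)
  have "gen m \<mu> \<in> Pre M \<nu>" using Pre_gen SpI by blast
  from Pre_smult[OF this, of c] have "(\<lambda>k. c * gen m \<mu> k) \<in> Pre M \<nu>" .
  from Pre_add[OF SpI.IH[OF SpI.prems] this] show ?case .
qed

lemma Sp_from_sh:
  assumes "sh \<nu> a \<in> Sp M" "\<nu> \<in> M"
  shows "a \<in> Sp M"
proof -
  obtain b where b: "b \<in> Sp M" "sh \<nu> b = sh \<nu> a" using Sp_Pre[OF assms] unfolding Pre_def by blast
  define d where "d = (\<lambda>k. a k - b k)"
  have ds: "d (Suc k) = \<nu> * d k" for k
  proof -
    have "a (Suc k) - \<nu> * a k = b (Suc k) - \<nu> * b k" using b(2) unfolding sh_def fun_eq_iff by metis
    then show ?thesis unfolding d_def by (simp add: algebra_simps)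
  qed
  define d0 where "d0 = d 0"
  have dk: "d k = d0 * \<nu> ^ k" for k unfolding d0_def by (induction k) (simp_all add: ds)
  have "(\<lambda>k. d0 * gen 0 \<nu> k) \<in> Sp M" using Sp_gen assms by blast
  then have "(\<lambda>k. b k + d0 * gen 0 \<nu> k) \<in> Sp M" using Sp_add b by blast
  moreover have "(\<lambda>k. b k + d0 * gen 0 \<nu> k) = a"
  proof
    fix k show "b k + d0 * gen 0 \<nu> k = a k" using dk[of k] unfolding d_def by (simp add: gen_def diff_eq_eq add.commute)
  qed
  ultimately show ?thesis by simp
qed

fun iter_sh :: "complex list \<Rightarrow> (nat \<Rightarrow> complex) \<Rightarrow> nat \<Rightarrow> complex" where
  "iter_sh [] a = a"
| "iter_sh (\<mu>#ms) a = iter_sh ms (sh \<mu> a)"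

lemma iter_sh_Sp: "set ms \<subseteq> M \<Longrightarrow> iter_sh ms a = (\<lambda>_. 0) \<Longrightarrow> a \<in> Sp M"
proof (induction ms arbitrary: a)
  case Nil then show ?case using Sp.Sp0 by simp
next
  case (Cons \<mu> ms)
  then have "sh \<mu> a \<in> Sp M" by simp
  then show ?case using Sp_from_sh Cons by auto
qed


lemma egf_gen:
  "(\<lambda>k. complex_of_real t ^ k / of_nat (fact k) * (c * gen m \<mu> k)) sums
     (c / of_nat (fact m) * complex_of_real t ^ m * exp (\<mu> * complex_of_real t))"
proof -
  define x where "x = \<mu> * complex_of_real t"
  define f where "f = (\<lambda>k. complex_of_real t ^ k / of_nat (fact k) * (c * gen m \<mu> k))"
  have f0: "sum f {..<m} = 0" by (auto simp: f_def gen_def binomial_eq_0 intro!: sum.neutral)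
  have fs: "f (i + m) = (c / of_nat (fact m) * complex_of_real t ^ m) * (x ^ i /\<^sub>R fact i)" for i
  proof -
    have "of_nat ((i+m) choose m) = (fact (i+m) / (fact m * fact i) :: complex)"
      using binomial_fact[of m "i+m", where 'a=complex] by simp
    moreover have "(fact (i + m) :: complex) \<noteq> 0" by simp
    ultimately show ?thesis
      by (simp add: f_def gen_def x_def scaleR_conv_of_real power_add power_mult_distrib field_simps)
  qed
  have "(\<lambda>i. f (i + m)) sums ((c / of_nat (fact m) * complex_of_real t ^ m) * exp x)"
    unfolding fs by (intro sums_mult exp_converges)
  then have "f sums ((c / of_nat (fact m) * complex_of_real t ^ m) * exp x + sum f {..<m})"
    using sums_iff_shift by blast
  then show ?thesis using f0 by (simp add: f_def x_def)
qed

lemma R_zero: "(\<lambda>t. 0) \<in> exp_poly_ring lam"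
  unfolding exp_poly_ring_def by (rule CollectI, rule exI[of _ "{}"]) simp

lemma R_add:
  assumes "f \<in> exp_poly_ring lam" "g \<in> exp_poly_ring lam"
  shows "(\<lambda>t. f t + g t) \<in> exp_poly_ring lam"
proof -
  define T where "T = (\<lambda>(m::nat, k::'a \<Rightarrow> nat) (t::real). complex_of_real t ^ m *
                    (\<Prod>i\<in>UNIV. exp (lam i * complex_of_real t) ^ k i))"
  have Te: "(\<lambda>(m, k). c (m, k) * complex_of_real t ^ m *
                    (\<Prod>i\<in>UNIV. exp (lam i * complex_of_real t) ^ k i)) = (\<lambda>p. c p * T p t)" for c t
    by (auto simp: T_def fun_eq_iff)
  obtain P1 c1 where 1: "finite P1" "\<And>t. f t = (\<Sum>p\<in>P1. c1 p * T p t)"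
    using assms(1) unfolding exp_poly_ring_def Te by blast
  obtain P2 c2 where 2: "finite P2" "\<And>t. g t = (\<Sum>p\<in>P2. c2 p * T p t)"
    using assms(2) unfolding exp_poly_ring_def Te by blast
  define c where "c = (\<lambda>p. (if p \<in> P1 then c1 p else 0) + (if p \<in> P2 then c2 p else 0))"
  have "f t + g t = (\<Sum>p\<in>P1 \<union> P2. c p * T p t)" for t
  proof -
    have "(\<Sum>p\<in>P1 \<union> P2. c p * T p t) = (\<Sum>p\<in>P1 \<union> P2. (if p \<in> P1 then c1 p * T p t else 0))
          + (\<Sum>p\<in>P1 \<union> P2. (if p \<in> P2 then c2 p * T p t else 0))"
      unfolding sum.distrib[symmetric] by (rule sum.cong) (auto simp: c_def distrib_right)
    also have "\<dots> = (\<Sum>p\<in>P1. c1 p * T p t) + (\<Sum>p\<in>P2. c2 p * T p t)"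
      using 1(1) 2(1) by (simp add: sum.If_cases Int_absorb1 Int_absorb2)
    finally show ?thesis using 1 2 by simp
  qed
  then show ?thesis unfolding exp_poly_ring_def Te using 1(1) 2(1) by blast
qed

lemma R_term:
  "(\<lambda>t. c * complex_of_real t ^ m * exp ((\<Sum>i\<in>UNIV. of_nat (\<gamma> i) * lam i) * complex_of_real t))
     \<in> exp_poly_ring (lam :: 'n::finite \<Rightarrow> complex)"
proof -
  have "exp ((\<Sum>i\<in>UNIV. of_nat (\<gamma> i) * lam i) * complex_of_real t) =
        (\<Prod>i\<in>UNIV. exp (lam i * complex_of_real t) ^ \<gamma> i)" for t
    by (simp add: sum_distrib_right exp_sum exp_of_nat_mult[symmetric] mult.assoc)
  then show ?thesis unfolding exp_poly_ring_def
    by (intro CollectI exI[of _ "{(m, \<gamma>)}"] exI[of _ "\<lambda>_. c"]) simp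
qed

definition MS :: "('n::finite \<Rightarrow> complex) \<Rightarrow> complex set" where
  "MS lam = {\<Sum>i\<in>UNIV. of_nat (\<gamma> i) * lam i | \<gamma>. True}"

lemma Sp_egf:
  fixes lam :: "'n::finite \<Rightarrow> complex"
  assumes "a \<in> Sp (MS lam)"
  shows "(\<forall>t. summable (\<lambda>k. complex_of_real t ^ k / of_nat (fact k) * a k)) \<and>
         (\<lambda>t. \<Sum>k. complex_of_real t ^ k / of_nat (fact k) * a k) \<in> exp_poly_ring lam"
  using assms
proof (induction a rule: Sp.induct)
  case Sp0 then show ?case using R_zero by simp
next
  case (SpI a \<mu> c m)
  obtain \<gamma> where g: "\<mu> = (\<Sum>i\<in>UNIV. of_nat (\<gamma> i) * lam i)" using SpI(2) unfolding MS_def by blast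
  have s: "\<And>t. (\<lambda>k. complex_of_real t ^ k / of_nat (fact k) * (c * gen m \<mu> k)) sums
     (c / of_nat (fact m) * complex_of_real t ^ m * exp (\<mu> * complex_of_real t))" by (rule egf_gen)
  have e: "(\<lambda>k. complex_of_real t ^ k / of_nat (fact k) * (a k + c * gen m \<mu> k)) =
     (\<lambda>k. complex_of_real t ^ k / of_nat (fact k) * a k + complex_of_real t ^ k / of_nat (fact k) * (c * gen m \<mu> k))" for t
    by (simp add: distrib_left)
  have "summable (\<lambda>k. complex_of_real t ^ k / of_nat (fact k) * (a k + c * gen m \<mu> k))" for t
    unfolding e using SpI.IH s[of t] by (intro summable_add) (auto simp: sums_iff)
  moreover have "(\<lambda>t. \<Sum>k. complex_of_real t ^ k / of_nat (fact k) * (a k + c * gen m \<mu> k)) =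
     (\<lambda>t. (\<Sum>k. complex_of_real t ^ k / of_nat (fact k) * a k) +
          c / of_nat (fact m) * complex_of_real t ^ m * exp (\<mu> * complex_of_real t))"
  proof
    fix t
    show "(\<Sum>k. complex_of_real t ^ k / of_nat (fact k) * (a k + c * gen m \<mu> k)) =
         (\<Sum>k. complex_of_real t ^ k / of_nat (fact k) * a k) +
          c / of_nat (fact m) * complex_of_real t ^ m * exp (\<mu> * complex_of_real t)"
      unfolding e using SpI.IH s[of t] by (subst suminf_add[symmetric]) (auto simp: sums_iff)
  qed
  moreover have "(\<lambda>t. c / of_nat (fact m) * complex_of_real t ^ m * exp (\<mu> * complex_of_real t)) \<in> exp_poly_ring lam"
    unfolding g by (rule R_term)
  ultimately show ?case using R_add SpI.IH by auto
qed


definition deg :: "('n::finite \<Rightarrow> nat) \<Rightarrow> nat" where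
  "deg \<beta> = (\<Sum>i\<in>UNIV. \<beta> i)"

definition FF :: "nat \<Rightarrow> 'n::finite mfps set" where
  "FF d = {f. \<forall>\<beta>. deg \<beta> < d \<longrightarrow> f \<beta> = 0}"

definition Dn :: "('n \<Rightarrow> nat) \<Rightarrow> ('n \<Rightarrow> nat) set" where
  "Dn \<gamma> = {\<alpha>. \<forall>i. \<alpha> i \<le> \<gamma> i}"

lemma mult_Dn: "mfps_mult f g = (\<lambda>\<gamma>. \<Sum>\<alpha>\<in>Dn \<gamma>. f \<alpha> * g (\<lambda>i. \<gamma> i - \<alpha> i))"
  unfolding mfps_mult_def Dn_def ..

lemma finite_Dn: "finite (Dn (\<gamma> :: 'n::finite \<Rightarrow> nat))"
proof -
  have "Dn \<gamma> = Pi\<^sub>E UNIV (\<lambda>i. {..\<gamma> i})" by (auto simp: Dn_def PiE_UNIV_domain)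
  then show ?thesis by (simp add: finite_PiE)
qed

lemma deg_split: "\<alpha> \<in> Dn \<gamma> \<Longrightarrow> deg \<alpha> + deg (\<lambda>i. \<gamma> i - \<alpha> i) = deg (\<gamma>::'n::finite\<Rightarrow>nat)"
  unfolding deg_def Dn_def by (simp add: sum.distrib[symmetric])

lemma FF_mono: "d \<le> e \<Longrightarrow> f \<in> FF e \<Longrightarrow> f \<in> FF d"
  unfolding FF_def by auto

lemma FF_0[simp]: "f \<in> FF 0" unfolding FF_def by simp

lemma FF_mult: "f \<in> FF a \<Longrightarrow> g \<in> FF b \<Longrightarrow> mfps_mult f g \<in> FF (a + b)"
proof -
  assume f: "f \<in> FF a" and g: "g \<in> FF b"
  show ?thesis unfolding FF_def mult_Dn
  proof (intro CollectI allI impI sum.neutral ballI)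
    fix \<gamma> :: "'a \<Rightarrow> nat" and \<alpha> assume d: "deg \<gamma> < a + b" and \<alpha>: "\<alpha> \<in> Dn \<gamma>"
    from deg_split[OF \<alpha>] d have "deg \<alpha> < a \<or> deg (\<lambda>i. \<gamma> i - \<alpha> i) < b" by linarith
    then show "f \<alpha> * g (\<lambda>i. \<gamma> i - \<alpha> i) = 0" using f g unfolding FF_def by auto
  qed
qed

lemma FF_add: "f \<in> FF d \<Longrightarrow> g \<in> FF d \<Longrightarrow> (\<lambda>\<beta>. f \<beta> + g \<beta>) \<in> FF d"
  unfolding FF_def by auto
lemma FF_diff: "f \<in> FF d \<Longrightarrow> g \<in> FF d \<Longrightarrow> (\<lambda>\<beta>. f \<beta> - g \<beta>) \<in> FF d"
  unfolding FF_def by auto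
lemma FF_sc: "f \<in> FF d \<Longrightarrow> (\<lambda>\<beta>. c * f \<beta>) \<in> FF d"
  unfolding FF_def by auto
lemma FF_zero[simp]: "(\<lambda>\<beta>. 0) \<in> FF d"
  unfolding FF_def by auto
lemma FF_sum: "(\<And>x. x \<in> A \<Longrightarrow> h x \<in> FF d) \<Longrightarrow> (\<lambda>\<beta>. \<Sum>x\<in>A. h x \<beta>) \<in> FF d"
  unfolding FF_def by (auto intro!: sum.neutral)

lemma mult_add_left: "mfps_mult (\<lambda>\<beta>. f \<beta> + g \<beta>) h = (\<lambda>\<beta>. mfps_mult f h \<beta> + mfps_mult g h \<beta>)"
  unfolding mult_Dn by (simp add: distrib_right sum.distrib)
lemma mult_add_right: "mfps_mult h (\<lambda>\<beta>. f \<beta> + g \<beta>) = (\<lambda>\<beta>. mfps_mult h f \<beta> + mfps_mult h g \<beta>)"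
  unfolding mult_Dn by (simp add: distrib_left sum.distrib)
lemma mult_diff_left: "mfps_mult (\<lambda>\<beta>. f \<beta> - g \<beta>) h = (\<lambda>\<beta>. mfps_mult f h \<beta> - mfps_mult g h \<beta>)"
  unfolding mult_Dn by (simp add: left_diff_distrib sum_subtractf)
lemma mult_diff_right: "mfps_mult h (\<lambda>\<beta>. f \<beta> - g \<beta>) = (\<lambda>\<beta>. mfps_mult h f \<beta> - mfps_mult h g \<beta>)"
  unfolding mult_Dn by (simp add: right_diff_distrib sum_subtractf)
lemma mult_sc_left: "mfps_mult (\<lambda>\<beta>. c * f \<beta>) h = (\<lambda>\<beta>. c * mfps_mult f h \<beta>)"
  unfolding mult_Dn by (simp add: sum_distrib_left mult.assoc)
lemma mult_sc_right: "mfps_mult h (\<lambda>\<beta>. c * f \<beta>) = (\<lambda>\<beta>. c * mfps_mult h f \<beta>)"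
  unfolding mult_Dn by (simp add: sum_distrib_left mult.left_commute)
lemma mult_sum_left: "mfps_mult (\<lambda>\<beta>. \<Sum>x\<in>A. f x \<beta>) h = (\<lambda>\<beta>. \<Sum>x\<in>A. mfps_mult (f x) h \<beta>)"
  unfolding mult_Dn by (simp add: sum_distrib_right sum.swap[of _ A])
lemma mult_sum_right: "mfps_mult h (\<lambda>\<beta>. \<Sum>x\<in>A. f x \<beta>) = (\<lambda>\<beta>. \<Sum>x\<in>A. mfps_mult h (f x) \<beta>)"
  unfolding mult_Dn by (simp add: sum_distrib_left sum.swap[of _ A])

definition ei :: "'n \<Rightarrow> 'n \<Rightarrow> nat" where "ei i = (\<lambda>j. if j = i then 1 else 0)"

lemma coord_ei: "coord i = mono (ei i)" unfolding coord_def ei_def ..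

lemma mult_coord:
  "mfps_mult (coord i) g \<beta> = (if 0 < \<beta> i then g (\<beta>(i := \<beta> i - 1)) else 0)"
proof -
  have "mfps_mult (coord i) g \<beta> = (\<Sum>\<alpha>\<in>Dn \<beta>. if \<alpha> = ei i then g (\<lambda>j. \<beta> j - \<alpha> j) else 0)"
    unfolding mult_Dn coord_ei mono_def by (intro sum.cong) auto
  also have "\<dots> = (if ei i \<in> Dn \<beta> then g (\<lambda>j. \<beta> j - ei i j) else 0)"
    by (simp add: sum.delta[OF finite_Dn])
  also have "\<dots> = (if 0 < \<beta> i then g (\<beta>(i := \<beta> i - 1)) else 0)"
  proof -
    have "ei i \<in> Dn \<beta> \<longleftrightarrow> 0 < \<beta> i" by (auto simp: Dn_def ei_def)
    moreover have "(\<lambda>j. \<beta> j - ei i j) = \<beta>(i := \<beta> i - 1)" by (auto simp: ei_def)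
    ultimately show ?thesis by simp
  qed
  finally show ?thesis .
qed

lemma mono_Suc: "mono (\<gamma>(i := Suc (\<gamma> i))) = mfps_mult (coord i) (mono \<gamma>)"
proof
  fix \<beta>
  show "mono (\<gamma>(i := Suc (\<gamma> i))) \<beta> = mfps_mult (coord i) (mono \<gamma>) \<beta>"
    unfolding mult_coord mono_def
    by (auto simp: fun_eq_iff split: if_splits)
qed

lemma mult_unit_left: "mfps_mult (mono (\<lambda>_. 0)) f = f"
proof
  fix \<beta>
  have "mfps_mult (mono (\<lambda>_. 0)) f \<beta> = (\<Sum>\<alpha>\<in>Dn \<beta>. if \<alpha> = (\<lambda>_. 0) then f (\<lambda>j. \<beta> j - \<alpha> j) else 0)"
    unfolding mult_Dn mono_def by (intro sum.cong) auto
  also have "\<dots> = f \<beta>" by (subst sum.delta[OF finite_Dn]) (simp add: Dn_def)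
  finally show "mfps_mult (mono (\<lambda>_. 0)) f \<beta> = f \<beta>" .
qed

lemma mult_unit_right: "mfps_mult f (mono (\<lambda>_. 0)) = f"
proof
  fix \<beta>
  have "mfps_mult f (mono (\<lambda>_. 0)) \<beta> = (\<Sum>\<alpha>\<in>Dn \<beta>. if \<alpha> = \<beta> then f \<alpha> else 0)"
    unfolding mult_Dn mono_def
  proof (intro sum.cong refl)
    fix \<alpha> assume "\<alpha> \<in> Dn \<beta>"
    then have "(\<lambda>i. \<beta> i - \<alpha> i) = (\<lambda>_. 0) \<longleftrightarrow> \<alpha> = \<beta>" by (auto simp: Dn_def fun_eq_iff intro: antisym)
    then show "f \<alpha> * (if (\<lambda>i. \<beta> i - \<alpha> i) = (\<lambda>_. 0) then 1 else 0) = (if \<alpha> = \<beta> then f \<alpha> else 0)" by simp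
  qed
  also have "\<dots> = f \<beta>" by (subst sum.delta[OF finite_Dn]) (simp add: Dn_def)
  finally show "mfps_mult f (mono (\<lambda>_. 0)) \<beta> = f \<beta>" .
qed

lemma deg_zero_iff: "deg \<beta> = 0 \<longleftrightarrow> \<beta> = (\<lambda>_. 0)"
  unfolding deg_def by (auto simp: fun_eq_iff)

lemma coord_FF1: "coord i \<in> FF 1"
  unfolding FF_def coord_ei mono_def by (auto simp: deg_zero_iff ei_def fun_eq_iff)

lemma deg_upd: "deg (\<beta>(i := Suc (\<beta> i))) = Suc (deg \<beta>)"
  unfolding deg_def by (simp add: sum.remove[of UNIV i])

lemma deg_dec: "0 < \<beta> i \<Longrightarrow> deg (\<beta>(i := \<beta> i - 1)) = deg \<beta> - 1"
  unfolding deg_def by (simp add: sum.remove[of UNIV i])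

lemma deg_pos: "0 < \<beta> i \<Longrightarrow> 0 < deg \<beta>"
  unfolding deg_def by (metis UNIV_I finite gr0I sum_eq_0_iff less_numeral_extra(3))


locale der =
  fixes V :: "'n::finite mfps \<Rightarrow> 'n mfps"
  assumes der: "is_der0 V"
begin

lemma Vadd: "V (\<lambda>\<beta>. f \<beta> + g \<beta>) = (\<lambda>\<beta>. V f \<beta> + V g \<beta>)"
  using der unfolding is_der0_def by blast
lemma Vsc: "V (\<lambda>\<beta>. c * f \<beta>) = (\<lambda>\<beta>. c * V f \<beta>)"
  using der unfolding is_der0_def by blast
lemma Vmult: "V (mfps_mult f g) = (\<lambda>\<beta>. mfps_mult (V f) g \<beta> + mfps_mult f (V g) \<beta>)"
  using der unfolding is_der0_def by blast
lemma Vm: "f (\<lambda>_. 0) = 0 \<Longrightarrow> V f (\<lambda>_. 0) = 0"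
  using der unfolding is_der0_def by blast

lemma V0: "V (\<lambda>\<beta>. 0) = (\<lambda>\<beta>. 0)"
  using Vsc[of 0 "\<lambda>\<beta>. 0"] by simp

lemma Vdiff: "V (\<lambda>\<beta>. f \<beta> - g \<beta>) = (\<lambda>\<beta>. V f \<beta> - V g \<beta>)"
proof -
  have "V (\<lambda>\<beta>. f \<beta> - g \<beta>) = V (\<lambda>\<beta>. f \<beta> + (\<lambda>\<beta>. (-1) * g \<beta>) \<beta>)" by simp
  also have "\<dots> = (\<lambda>\<beta>. V f \<beta> - V g \<beta>)" unfolding Vadd Vsc by simp
  finally show ?thesis .
qed

lemma Vsum: "V (\<lambda>\<beta>. \<Sum>x\<in>A. h x \<beta>) = (\<lambda>\<beta>. \<Sum>x\<in>A. V (h x) \<beta>)"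
proof (induction A rule: infinite_finite_induct)
  case (infinite A) then show ?case using V0 by simp
next
  case empty then show ?case using V0 by simp
next
  case (insert x F)
  have "V (\<lambda>\<beta>. \<Sum>x\<in>insert x F. h x \<beta>) = V (\<lambda>\<beta>. h x \<beta> + (\<lambda>\<beta>. \<Sum>x\<in>F. h x \<beta>) \<beta>)"
    using insert by simp
  also have "\<dots> = (\<lambda>\<beta>. \<Sum>x\<in>insert x F. V (h x) \<beta>)" unfolding Vadd insert.IH using insert by simp
  finally show ?case .
qed

lemma V_mono0: "V (mono (\<lambda>_. 0)) = (\<lambda>\<beta>. 0)"
proof -
  let ?u = "mono (\<lambda>_. 0) :: 'n mfps"
  have e: "V ?u = (\<lambda>\<beta>. V ?u \<beta> + V ?u \<beta>)" using Vmult[of ?u ?u] unfolding mult_unit_left mult_unit_right .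
  show ?thesis
  proof
    fix \<beta> show "V ?u \<beta> = 0" using fun_cong[OF e, of \<beta>] by simp
  qed
qed

definition sel :: "('n \<Rightarrow> nat) \<Rightarrow> 'n" where "sel \<beta> = (SOME i. 0 < \<beta> i)"

definition gdec :: "'n mfps \<Rightarrow> 'n \<Rightarrow> 'n mfps" where
  "gdec f i = (\<lambda>\<delta>. if sel (\<delta>(i := Suc (\<delta> i))) = i then f (\<delta>(i := Suc (\<delta> i))) else 0)"

lemma gdec_FF: "f \<in> FF (Suc d) \<Longrightarrow> gdec f i \<in> FF d"
  unfolding FF_def gdec_def by (auto simp: deg_upd)

lemma gdec_eq: assumes "f \<in> FF (Suc d)"
  shows "f = (\<lambda>\<beta>. \<Sum>i\<in>UNIV. mfps_mult (coord i) (gdec f i) \<beta>)"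
proof
  fix \<beta>
  have t: "mfps_mult (coord i) (gdec f i) \<beta> = (if 0 < \<beta> i \<and> sel \<beta> = i then f \<beta> else 0)" for i
  proof (cases "0 < \<beta> i")
    case True
    then have "(\<beta>(i := \<beta> i - 1))(i := Suc ((\<beta>(i := \<beta> i - 1)) i)) = \<beta>" by auto
    then show ?thesis using True by (simp add: mult_coord gdec_def)
  qed (simp add: mult_coord)
  show "f \<beta> = (\<Sum>i\<in>UNIV. mfps_mult (coord i) (gdec f i) \<beta>)"
  proof (cases "\<exists>i. 0 < \<beta> i")
    case True
    then have s: "0 < \<beta> (sel \<beta>)" unfolding sel_def by (rule someI_ex)
    have "(\<Sum>i\<in>UNIV. mfps_mult (coord i) (gdec f i) \<beta>) = (\<Sum>i\<in>UNIV. if i = sel \<beta> then f \<beta> else 0)"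
      unfolding t using s by (intro sum.cong) auto
    then show ?thesis by simp
  next
    case False
    then have "\<beta> = (\<lambda>_. 0)" by auto
    then have "f \<beta> = 0" using assms unfolding FF_def by (simp add: deg_def)
    then show ?thesis unfolding t using False by simp
  qed
qed

lemma V_FF: "f \<in> FF d \<Longrightarrow> V f \<in> FF d"
proof (induction d arbitrary: f)
  case 0 then show ?case by simp
next
  case (Suc d)
  have "V f = (\<lambda>\<beta>. \<Sum>i\<in>UNIV. V (mfps_mult (coord i) (gdec f i)) \<beta>)"
    by (subst gdec_eq[OF Suc.prems]) (rule Vsum)
  also have "\<dots> \<in> FF (Suc d)"
  proof (intro FF_sum)
    fix i
    have c: "V (coord i) \<in> FF 1"
      using Vm[of "coord i"] coord_FF1[of i] unfolding FF_def by (auto simp: deg_zero_iff less_Suc_eq)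
    have g: "gdec f i \<in> FF d" using gdec_FF[OF Suc.prems] .
    show "V (mfps_mult (coord i) (gdec f i)) \<in> FF (Suc d)"
      unfolding Vmult using FF_mult[OF c g] FF_mult[OF coord_FF1 Suc.IH[OF g]]
      by (intro FF_add) auto
  qed
  finally show ?case .
qed

definition W :: "complex \<Rightarrow> 'n mfps \<Rightarrow> 'n mfps" where
  "W \<mu> f = (\<lambda>\<beta>. V f \<beta> - \<mu> * f \<beta>)"

lemma W_FF: "f \<in> FF d \<Longrightarrow> W \<mu> f \<in> FF d"
  unfolding W_def by (intro FF_diff V_FF FF_sc)

lemma Wpow_FF: "f \<in> FF d \<Longrightarrow> (W \<mu> ^^ k) f \<in> FF d"
  by (induction k) (auto intro: W_FF)

lemma Wadd: "W \<mu> (\<lambda>\<beta>. f \<beta> + g \<beta>) = (\<lambda>\<beta>. W \<mu> f \<beta> + W \<mu> g \<beta>)"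
  unfolding W_def Vadd by (simp add: algebra_simps)
lemma Wdiff: "W \<mu> (\<lambda>\<beta>. f \<beta> - g \<beta>) = (\<lambda>\<beta>. W \<mu> f \<beta> - W \<mu> g \<beta>)"
  unfolding W_def Vdiff by (simp add: algebra_simps)
lemma Wsc: "W \<mu> (\<lambda>\<beta>. c * f \<beta>) = (\<lambda>\<beta>. c * W \<mu> f \<beta>)"
  unfolding W_def Vsc by (simp add: algebra_simps)
lemma Wsum: "W \<mu> (\<lambda>\<beta>. \<Sum>x\<in>A. h x \<beta>) = (\<lambda>\<beta>. \<Sum>x\<in>A. W \<mu> (h x) \<beta>)"
  unfolding W_def Vsum by (simp add: sum_subtractf sum_distrib_left)

lemma Wpow_add: "(W \<mu> ^^ k) (\<lambda>\<beta>. f \<beta> + g \<beta>) = (\<lambda>\<beta>. (W \<mu> ^^ k) f \<beta> + (W \<mu> ^^ k) g \<beta>)"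
  by (induction k) (simp_all add: Wadd)
lemma Wpow_diff: "(W \<mu> ^^ k) (\<lambda>\<beta>. f \<beta> - g \<beta>) = (\<lambda>\<beta>. (W \<mu> ^^ k) f \<beta> - (W \<mu> ^^ k) g \<beta>)"
  by (induction k) (simp_all add: Wdiff)
lemma Wpow_sc: "(W \<mu> ^^ k) (\<lambda>\<beta>. c * f \<beta>) = (\<lambda>\<beta>. c * (W \<mu> ^^ k) f \<beta>)"
  by (induction k) (simp_all add: Wsc)
lemma Wpow_sum: "(W \<mu> ^^ k) (\<lambda>\<beta>. \<Sum>x\<in>A. h x \<beta>) = (\<lambda>\<beta>. \<Sum>x\<in>A. (W \<mu> ^^ k) (h x) \<beta>)"
  by (induction k) (simp_all add: Wsum)

lemma W_comm: "W a (W b f) = W b (W a f)"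
  unfolding W_def Vdiff Vsc by (simp add: algebra_simps fun_eq_iff)

lemma Wpow_comm: "W a ((W b ^^ k) f) = (W b ^^ k) (W a f)"
proof (induction k)
  case (Suc k)
  have "W a ((W b ^^ Suc k) f) = W b (W a ((W b ^^ k) f))" using W_comm by simp
  also have "\<dots> = (W b ^^ Suc k) (W a f)" using Suc by simp
  finally show ?case .
qed simp

lemma W_leib: "W (a + b) (mfps_mult f g) = (\<lambda>\<beta>. mfps_mult (W a f) g \<beta> + mfps_mult f (W b g) \<beta>)"
  unfolding W_def Vmult mult_diff_left mult_diff_right mult_sc_left mult_sc_right
  by (simp add: fun_eq_iff algebra_simps)

lemma prod_gen:
  "f \<in> FF d \<Longrightarrow> g \<in> FF e \<Longrightarrow> (W a ^^ m) f \<in> FF (Suc d) \<Longrightarrow> (W b ^^ p) g \<in> FF (Suc e) \<Longrightarrow> n = m + p \<Longrightarrow>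
   (W (a + b) ^^ n) (mfps_mult f g) \<in> FF (Suc (d + e))"
proof (induction n arbitrary: m p f g)
  case 0
  then have "f \<in> FF (Suc d)" "g \<in> FF (Suc e)" by auto
  then show ?case using FF_mult[of f "Suc d" g e] FF_mono[of e "Suc e" g] by simp
next
  case (Suc n)
  have split: "(W (a + b) ^^ Suc n) (mfps_mult f g) =
     (\<lambda>\<beta>. (W (a + b) ^^ n) (mfps_mult (W a f) g) \<beta> + (W (a + b) ^^ n) (mfps_mult f (W b g)) \<beta>)"
    by (simp add: funpow_Suc_right W_leib Wpow_add del: funpow.simps)
  have 1: "(W (a + b) ^^ n) (mfps_mult (W a f) g) \<in> FF (Suc (d + e))"
  proof (cases m)
    case 0
    then have "f \<in> FF (Suc d)" using Suc by simp
    then have "mfps_mult (W a f) g \<in> FF (Suc (d + e))" using FF_mult[OF W_FF[OF \<open>f \<in> FF (Suc d)\<close>] Suc.prems(2)] by simp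
    then show ?thesis by (rule Wpow_FF)
  next
    case (Suc m')
    have "(W a ^^ m') (W a f) \<in> FF (Suc d)" using Suc.prems(3) Suc by (simp add: funpow_Suc_right del: funpow.simps)
    then show ?thesis using Suc.IH[where f="W a f" and m=m' and g=g and p=p] Suc.prems W_FF Suc by auto
  qed
  have 2: "(W (a + b) ^^ n) (mfps_mult f (W b g)) \<in> FF (Suc (d + e))"
  proof (cases p)
    case 0
    then have "g \<in> FF (Suc e)" using Suc by simp
    then have "mfps_mult f (W b g) \<in> FF (Suc (d + e))" using FF_mult[OF Suc.prems(1) W_FF[OF \<open>g \<in> FF (Suc e)\<close>]] by simp
    then show ?thesis by (rule Wpow_FF)
  next
    case (Suc p')
    have "(W b ^^ p') (W b g) \<in> FF (Suc e)" using Suc.prems(4) Suc by (simp add: funpow_Suc_right del: funpow.simps)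
    then show ?thesis using Suc.IH[where f=f and m=m and g="W b g" and p=p'] Suc.prems W_FF Suc by auto
  qed
  show ?case unfolding split using 1 2 by (rule FF_add)
qed

end

definition Mx :: "complex^'n::finite^'n \<Rightarrow> complex poly^'n^'n" where
  "Mx A = (\<chi> i j. (if i = j then [:0, 1:] else 0) - [:A $ i $ j:])"

definition Cf :: "complex^'n::finite^'n \<Rightarrow> complex poly^'n^'n" where
  "Cf A = (\<chi> i j. det (\<chi> r. if r = j then axis i 1 else Mx A $ r))"

lemma charpoly_Mx: "charpoly_cart A = det (Mx A)"
  unfolding charpoly_cart_def Mx_def ..

lemma adj_rel: "(\<Sum>i\<in>UNIV. Mx A $ k $ i * Cf A $ i $ j) = (if k = j then det (Mx A) else 0)"
proof -
  let ?M = "Mx A"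
  have "(\<Sum>i\<in>UNIV. ?M $ k $ i * Cf A $ i $ j) =
        (\<Sum>i\<in>UNIV. det (\<chi> r. if r = j then ?M $ k $ i *s axis i 1 else ?M $ r))"
    unfolding Cf_def by (simp add: det_row_mul)
  also have "\<dots> = det (\<chi> r. if r = j then (\<Sum>i\<in>UNIV. ?M $ k $ i *s axis i 1) else ?M $ r)"
    by (rule det_linear_row_sum[symmetric]) simp
  also have "\<dots> = det (\<chi> r. if r = j then ?M $ k else ?M $ r)"
    unfolding basis_expansion ..
  also have "\<dots> = (if k = j then det ?M else 0)"
  proof (cases "k = j")
    case True
    then have "(\<chi> r. if r = j then ?M $ k else ?M $ r) = ?M" by (simp add: vec_eq_iff)
    then show ?thesis using True by simp
  next
    case False
    have "det (\<chi> r. if r = j then ?M $ k else ?M $ r) = 0"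
      by (rule det_identical_rows[of j k]) (use False in \<open>auto simp: row_def vec_eq_iff\<close>)
    then show ?thesis using False by simp
  qed
  finally show ?thesis .
qed

definition Bc :: "complex^'n::finite^'n \<Rightarrow> nat \<Rightarrow> complex^'n^'n" where
  "Bc A n = (\<chi> i j. coeff (Cf A $ i $ j) n)"

lemma coeff_rel:
  "(if n = 0 then 0 else Bc A (n - 1) $ k $ j) - (\<Sum>i\<in>UNIV. A $ k $ i * Bc A n $ i $ j)
   = (if k = j then coeff (det (Mx A)) n else 0)"
proof -
  have "coeff (\<Sum>i\<in>UNIV. Mx A $ k $ i * Cf A $ i $ j) n = (if k = j then coeff (det (Mx A)) n else 0)"
    unfolding adj_rel by simp
  moreover have "coeff (\<Sum>i\<in>UNIV. Mx A $ k $ i * Cf A $ i $ j) n =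
     (\<Sum>i\<in>UNIV. (if k = i then (if n = 0 then 0 else coeff (Cf A $ i $ j) (n - 1)) else 0)) -
     (\<Sum>i\<in>UNIV. A $ k $ i * coeff (Cf A $ i $ j) n)"
    unfolding coeff_sum sum_subtractf[symmetric]
    by (intro sum.cong refl) (auto simp: Mx_def left_diff_distrib coeff_pCons')
  moreover have "(\<Sum>i\<in>UNIV. (if k = i then (if n = 0 then 0 else coeff (Cf A $ i $ j) (n - 1)) else 0))
     = (if n = 0 then 0 else coeff (Cf A $ k $ j) (n - 1))" by (simp add: sum.delta)
  moreover have "Bc A m $ i $ j = coeff (Cf A $ i $ j) m" for m i j by (simp add: Bc_def)
  moreover have "(if n = 0 then 0 else Bc A (n - 1) $ k $ j) = (if n = 0 then 0 else coeff (Cf A $ k $ j) (n - 1))"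
    by (simp add: Bc_def)
  ultimately show ?thesis by (simp only:)
qed

lemma vm_sum: "(\<Sum>x\<in>S. f x) v* (A :: 'a::comm_semiring_1^'n::finite^'m::finite) = (\<Sum>x\<in>S. f x v* A)"
  by (induction S rule: infinite_finite_induct) (simp_all add: vector_matrix_left_distrib)

lemma vm_diff: "(x - y) v* (A :: 'a::comm_ring_1^'n::finite^'m::finite) = x v* A - y v* A"
  by (simp add: vec_eq_iff vector_matrix_mult_def algebra_simps sum_subtractf)

lemma vm_diff_r: "x v* (M - N :: 'a::comm_ring_1^'n::finite^'m::finite) = x v* M - x v* N"
  by (simp add: vec_eq_iff vector_matrix_mult_def algebra_simps sum_subtractf)

lemma vec_rel:
  "(if n = 0 then 0 else x v* Bc A (n - 1)) - (x v* A) v* Bc A n = coeff (det (Mx A)) n *s x"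
proof -
  have F1: "(x v* A) v* Bc A n = x v* (A ** Bc A n)" by (rule vector_matrix_mul_assoc)
  have F2: "(if n = 0 then 0 else Bc A (n - 1)) - A ** Bc A n = (\<chi> i j. if i = j then coeff (det (Mx A)) n else 0)"
  proof -
    have "((if n = 0 then 0 else Bc A (n - 1)) - A ** Bc A n) $ i $ j = (if n = 0 then 0 else Bc A (n - 1) $ i $ j) - (\<Sum>k\<in>UNIV. A $ i $ k * Bc A n $ k $ j)" for i j
      by (simp add: matrix_matrix_mult_def)
    then show ?thesis unfolding vec_eq_iff using coeff_rel[of n A] by simp
  qed
  have F3: "x v* (\<chi> i j. if i = j then coeff (det (Mx A)) n else 0) = coeff (det (Mx A)) n *s x"
    by (simp add: vec_eq_iff vector_matrix_mult_def if_distrib sum.delta' cong: if_cong)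
  have F4: "(if n = 0 then 0 else x v* Bc A (n - 1)) = x v* (if n = 0 then 0 else Bc A (n - 1))" by simp
  have "(if n = 0 then 0 else x v* Bc A (n - 1)) - (x v* A) v* Bc A n =
        x v* (if n = 0 then 0 else Bc A (n - 1)) - x v* (A ** Bc A n)" by (simp only: F4 F1)
  also have "\<dots> = x v* ((if n = 0 then 0 else Bc A (n - 1)) - A ** Bc A n)" by (rule vm_diff_r[symmetric])
  also have "\<dots> = coeff (det (Mx A)) n *s x" unfolding F2 F3 ..
  finally show ?thesis .
qed

definition Tm :: "complex^'n::finite^'n \<Rightarrow> complex^'n \<Rightarrow> complex^'n" where
  "Tm A x = x v* A"

definition Pe :: "complex^'n::finite^'n \<Rightarrow> complex poly \<Rightarrow> complex^'n \<Rightarrow> complex^'n" where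
  "Pe A p c = (\<Sum>k\<le>degree p. coeff p k *s (Tm A ^^ k) c)"

lemma Pe_ext: "degree p \<le> K \<Longrightarrow> Pe A p c = (\<Sum>k\<le>K. coeff p k *s (Tm A ^^ k) c)"
  unfolding Pe_def by (rule sum.mono_neutral_left) (auto simp: coeff_eq_0)

theorem CH: "Pe A (det (Mx A)) c = 0"
proof -
  define X where "X k = (Tm A ^^ k) c" for k
  have XS: "X (Suc k) = X k v* A" for k by (simp add: X_def Tm_def)
  define K0 where "K0 = degree (det (Mx A)) + Max ((\<lambda>p. degree (Cf A $ fst p $ snd p)) ` UNIV)"
  have "degree (Cf A $ i $ j) \<le> K0" for i j
  proof -
    have "degree (Cf A $ fst (i,j) $ snd (i,j)) \<le> Max ((\<lambda>p. degree (Cf A $ fst p $ snd p)) ` UNIV)"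
      apply (rule Max_ge, simp)
      apply (rule image_eqI[where x="(i,j)"]) by auto
    then show ?thesis unfolding K0_def by simp
  qed
  then have B0: "Bc A (Suc K0) = 0" unfolding Bc_def by (auto simp: vec_eq_iff intro!: coeff_eq_0 le_imp_less_Suc)
  have dK: "degree (det (Mx A)) \<le> Suc K0" unfolding K0_def by simp
  have "Pe A (det (Mx A)) c = (\<Sum>k\<le>Suc K0. coeff (det (Mx A)) k *s X k)"
    unfolding X_def by (rule Pe_ext[OF dK])
  also have "\<dots> = (\<Sum>k\<le>Suc K0. (if k = 0 then 0 else X k v* Bc A (k - 1)) - X (Suc k) v* Bc A k)"
    by (intro sum.cong refl) (simp add: vec_rel[symmetric] XS)
  also have "\<dots> = (\<Sum>k\<le>Suc K0. (if k = 0 then 0 else X k v* Bc A (k - 1))) - (\<Sum>k\<le>Suc K0. X (Suc k) v* Bc A k)"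
    by (simp add: sum_subtractf)
  also have "(\<Sum>k\<le>Suc K0. (if k = 0 then 0 else X k v* Bc A (k - 1))) = (\<Sum>k\<le>K0. X (Suc k) v* Bc A k)"
    by (subst sum.atMost_Suc_shift) simp
  also have "(\<Sum>k\<le>Suc K0. X (Suc k) v* Bc A k) = (\<Sum>k\<le>K0. X (Suc k) v* Bc A k)"
    using B0 by simp
  finally show ?thesis by simp
qed

lemma smult_sum: "c *s (\<Sum>x\<in>S. f x) = (\<Sum>x\<in>S. c *s (f x :: 'a::comm_ring_1^'n::finite))"
  by (induction S rule: infinite_finite_induct) (simp_all add: vector_add_ldistrib)

definition Nm :: "complex^'n::finite^'n \<Rightarrow> complex \<Rightarrow> complex^'n \<Rightarrow> complex^'n" where
  "Nm A \<mu> x = x v* A - \<mu> *s x"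

lemma Pe_lin: "Pe A ([:-\<mu>, 1:] * q) c = Nm A \<mu> (Pe A q c)"
proof -
  define X where "X k = (Tm A ^^ k) c" for k
  have XS: "X (Suc k) = X k v* A" for k by (simp add: X_def Tm_def)
  define D where "D = degree q"
  have d1: "degree ([:-\<mu>, 1:] * q) \<le> Suc D"
    unfolding D_def using degree_mult_le[of "[:-\<mu>, 1:]" q] by simp
  have cf: "coeff ([:-\<mu>, 1:] * q) k = coeff (pCons 0 q) k - \<mu> * coeff q k" for k
    by (simp add: mult_pCons_left)
  have "Pe A ([:-\<mu>, 1:] * q) c = (\<Sum>k\<le>Suc D. coeff (pCons 0 q) k *s X k) - \<mu> *s (\<Sum>k\<le>Suc D. coeff q k *s X k)"
    unfolding Pe_ext[OF d1] X_def[symmetric] cf vector_sub_rdistrib sum_subtractf smult_sum vector_smult_assoc ..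
  also have "(\<Sum>k\<le>Suc D. coeff (pCons 0 q) k *s X k) = (\<Sum>k\<le>D. coeff q k *s X k) v* A"
    by (subst sum.atMost_Suc_shift) (simp add: vm_sum XS scalar_vector_matrix_assoc)
  also have "(\<Sum>k\<le>Suc D. coeff q k *s X k) = (\<Sum>k\<le>D. coeff q k *s X k)"
    by (simp add: D_def coeff_eq_0)
  finally show ?thesis unfolding Nm_def Pe_def D_def X_def .
qed


lemma Nm_add: "Nm A \<mu> (x + y) = Nm A \<mu> x + Nm A \<mu> y"
  unfolding Nm_def by (simp add: vector_matrix_left_distrib vector_add_ldistrib)
lemma Nm_diff: "Nm A \<mu> (x - y) = Nm A \<mu> x - Nm A \<mu> y"
  unfolding Nm_def by (simp add: vm_diff vector_ssub_ldistrib)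
lemma Nm_sc: "Nm A \<mu> (a *s x) = a *s Nm A \<mu> x"
  unfolding Nm_def by (simp add: scalar_vector_matrix_assoc vector_ssub_ldistrib mult.commute)
lemma Nm_zero: "Nm A \<mu> 0 = 0"
  unfolding Nm_def by simp
lemma Nm_sum: "Nm A \<mu> (\<Sum>x\<in>S. f x) = (\<Sum>x\<in>S. Nm A \<mu> (f x))"
  by (induction S rule: infinite_finite_induct) (simp_all add: Nm_add Nm_zero)

lemma Npow_add: "(Nm A \<mu> ^^ k) (x + y) = (Nm A \<mu> ^^ k) x + (Nm A \<mu> ^^ k) y"
  by (induction k) (simp_all add: Nm_add)
lemma Npow_diff: "(Nm A \<mu> ^^ k) (x - y) = (Nm A \<mu> ^^ k) x - (Nm A \<mu> ^^ k) y"
  by (induction k) (simp_all add: Nm_diff)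
lemma Npow_sc: "(Nm A \<mu> ^^ k) (a *s x) = a *s (Nm A \<mu> ^^ k) x"
  by (induction k) (simp_all add: Nm_sc)
lemma Npow_zero: "(Nm A \<mu> ^^ k) 0 = 0"
  by (induction k) (simp_all add: Nm_zero)
lemma Npow_sum: "(Nm A \<mu> ^^ k) (\<Sum>x\<in>S. f x) = (\<Sum>x\<in>S. (Nm A \<mu> ^^ k) (f x))"
  by (induction k) (simp_all add: Nm_sum)
lemma Npow_sum_list: "(Nm A \<mu> ^^ k) (sum_list (map f xs)) = sum_list (map (\<lambda>x. (Nm A \<mu> ^^ k) (f x)) xs)"
  by (induction xs) (simp_all add: Npow_add Npow_zero)

lemma Nm_shift: "Nm A \<mu> x = Nm A \<nu> x + (\<nu> - \<mu>) *s x"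
  unfolding Nm_def by (simp add: vector_sub_rdistrib)

fun iterN :: "complex^'n::finite^'n \<Rightarrow> complex list \<Rightarrow> complex^'n \<Rightarrow> complex^'n" where
  "iterN A [] c = c"
| "iterN A (\<mu>#ms) c = iterN A ms (Nm A \<mu> c)"

lemma iterN_snoc: "iterN A (ms @ [\<mu>]) c = Nm A \<mu> (iterN A ms c)"
  by (induction ms arbitrary: c) simp_all

lemma Pe_one: "Pe A 1 c = c"
  unfolding Pe_def by simp

lemma Pe_prod: "Pe A (prod_list (map (\<lambda>\<mu>. [:-\<mu>, 1:]) ms)) c = iterN A (rev ms) c"
proof (induction ms)
  case Nil then show ?case by (simp add: Pe_one)
next
  case (Cons a ms)
  have "prod_list (map (\<lambda>\<mu>. [:-\<mu>, 1:]) (a # ms)) = [:-a, 1:] * prod_list (map (\<lambda>\<mu>. [:-\<mu>, 1:]) ms)"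
    by (simp only: list.map prod_list.Cons)
  then show ?case by (simp only: Pe_lin Cons.IH iterN_snoc rev.simps)
qed

definition invN :: "complex^'n::finite^'n \<Rightarrow> complex \<Rightarrow> complex \<Rightarrow> nat \<Rightarrow> complex^'n \<Rightarrow> complex^'n" where
  "invN A \<nu> \<mu> r d = (\<Sum>k<r. ((-1)^k / (\<nu> - \<mu>)^(Suc k)) *s (Nm A \<nu> ^^ k) d)"

lemma invN_1:
  assumes "\<nu> \<noteq> \<mu>" "(Nm A \<nu> ^^ r) d = 0"
  shows "Nm A \<mu> (invN A \<nu> \<mu> r d) = d"
proof -
  define u where "u k = ((-1)^k / (\<nu> - \<mu>)^k) *s (Nm A \<nu> ^^ k) d" for k
  have "Nm A \<mu> (invN A \<nu> \<mu> r d) = Nm A \<nu> (invN A \<nu> \<mu> r d) + (\<nu> - \<mu>) *s invN A \<nu> \<mu> r d"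
    by (rule Nm_shift)
  also have "\<dots> = (\<Sum>k<r. u k - u (Suc k))"
  proof -
    have "Nm A \<nu> (invN A \<nu> \<mu> r d) = (\<Sum>k<r. - u (Suc k))"
      unfolding invN_def Nm_sum Nm_sc u_def
      by (intro sum.cong refl) (simp add: vector_smult_assoc[symmetric] field_simps)
    moreover have "(\<nu> - \<mu>) *s invN A \<nu> \<mu> r d = (\<Sum>k<r. u k)"
      unfolding invN_def smult_sum u_def using assms(1)
      by (intro sum.cong refl) (simp add: vector_smult_assoc field_simps)
    ultimately show ?thesis by (simp add: sum_subtractf sum_negf)
  qed
  also have "\<dots> = u 0 - u r" by (rule sum_lessThan_telescope')
  also have "\<dots> = d" using assms(2) by (simp add: u_def)
  finally show ?thesis .
qed

lemma invN_2:
  assumes "(Nm A \<nu> ^^ r) d = 0"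
  shows "(Nm A \<nu> ^^ r) (invN A \<nu> \<mu> r d) = 0"
proof -
  have "(Nm A \<nu> ^^ r) ((Nm A \<nu> ^^ k) d) = 0" for k
  proof -
    have "(Nm A \<nu> ^^ r) ((Nm A \<nu> ^^ k) d) = (Nm A \<nu> ^^ k) ((Nm A \<nu> ^^ r) d)"
      by (metis comp_apply funpow_add add.commute)
    then show ?thesis using assms Npow_zero by simp
  qed
  then show ?thesis unfolding invN_def Npow_sum Npow_sc by simp
qed

lemma Npow_mono: "(Nm A \<nu> ^^ r) d = 0 \<Longrightarrow> r \<le> s \<Longrightarrow> (Nm A \<nu> ^^ s) d = 0"
proof -
  assume a: "(Nm A \<nu> ^^ r) d = 0" "r \<le> s"
  then obtain k where k: "s = k + r" by (metis add.commute le_add_diff_inverse)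
  have "(Nm A \<nu> ^^ s) d = (Nm A \<nu> ^^ k) ((Nm A \<nu> ^^ r) d)" unfolding k funpow_add by simp
  then show ?thesis using a Npow_zero by simp
qed

lemma sum_list_filter:
  fixes f :: "'a \<Rightarrow> 'b::comm_monoid_add"
  shows
  "sum_list (map f xs) = sum_list (map f (filter P xs)) + sum_list (map f (filter (\<lambda>x. \<not> P x) xs))"
  by (induction xs) (auto simp: add_ac)

lemma decomp:
  "iterN A ms c = 0 \<Longrightarrow> \<exists>ps. c = sum_list (map snd ps) \<and>
      (\<forall>p\<in>set ps. fst p \<in> set ms \<and> (Nm A (fst p) ^^ length ms) (snd p) = 0)"
proof (induction ms arbitrary: c)
  case Nil then show ?case by (intro exI[of _ "[]"]) simp
next
  case (Cons \<mu> rest)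
  define r where "r = length rest"
  from Cons.prems have "iterN A rest (Nm A \<mu> c) = 0" by simp
  from Cons.IH[OF this] obtain ps' where ps': "Nm A \<mu> c = sum_list (map snd ps')"
    "\<And>p. p \<in> set ps' \<Longrightarrow> fst p \<in> set rest \<and> (Nm A (fst p) ^^ r) (snd p) = 0"
    unfolding r_def by blast
  define qs where "qs = filter (\<lambda>p. fst p \<noteq> \<mu>) ps'"
  define es where "es = filter (\<lambda>p. \<not> fst p \<noteq> \<mu>) ps'"
  define iv where "iv = (\<lambda>p. invN A (fst p) \<mu> r (snd p))"
  define c' where "c' = c - sum_list (map iv qs)"
  have Nc': "Nm A \<mu> c' = sum_list (map snd es)"
  proof -
    have "Nm A \<mu> (sum_list (map iv qs)) = sum_list (map snd qs)"
    proof -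
      have "Nm A \<mu> (sum_list (map iv qs)) = sum_list (map (\<lambda>p. Nm A \<mu> (iv p)) qs)"
        by (induction qs) (simp_all add: Nm_add Nm_zero)
      also have "\<dots> = sum_list (map snd qs)"
        by (intro arg_cong[where f=sum_list] map_cong refl)
           (use ps'(2) in \<open>auto simp: iv_def qs_def intro!: invN_1\<close>)
      finally show ?thesis .
    qed
    then show ?thesis unfolding c'_def Nm_diff ps'(1) qs_def es_def
      using sum_list_filter[of snd ps' "\<lambda>p. fst p \<noteq> \<mu>"] by simp
  qed
  have "(Nm A \<mu> ^^ Suc r) c' = 0"
  proof -
    have "(Nm A \<mu> ^^ Suc r) c' = (Nm A \<mu> ^^ r) (sum_list (map snd es))"
      by (simp add: funpow_Suc_right Nc' del: funpow.simps)
    also have "\<dots> = sum_list (map (\<lambda>p. (Nm A \<mu> ^^ r) (snd p)) es)" by (rule Npow_sum_list)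
    also have "\<dots> = sum_list (map (\<lambda>p. 0) es)"
      by (intro arg_cong[where f=sum_list] map_cong refl) (use ps'(2) in \<open>auto simp: es_def\<close>)
    finally show ?thesis by simp
  qed
  define ps where "ps = (\<mu>, c') # map (\<lambda>p. (fst p, iv p)) qs"
  have "c = sum_list (map snd ps)" unfolding ps_def c'_def by (simp add: comp_def)
  moreover have "\<forall>p\<in>set ps. fst p \<in> set (\<mu> # rest) \<and> (Nm A (fst p) ^^ length (\<mu> # rest)) (snd p) = 0"
  proof
    fix p assume "p \<in> set ps"
    then consider "p = (\<mu>, c')" | q where "q \<in> set qs" "p = (fst q, iv q)" unfolding ps_def by auto
    then show "fst p \<in> set (\<mu> # rest) \<and> (Nm A (fst p) ^^ length (\<mu> # rest)) (snd p) = 0"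
    proof cases
      case 1 then show ?thesis using \<open>(Nm A \<mu> ^^ Suc r) c' = 0\<close> by (simp add: r_def)
    next
      case 2
      then have q: "q \<in> set ps'" unfolding qs_def by simp
      have "(Nm A (fst q) ^^ r) (iv q) = 0" unfolding iv_def using ps'(2)[OF q] by (intro invN_2) simp
      then show ?thesis using 2 ps'(2)[OF q] Npow_mono[where A=A and \<nu>="fst q" and r=r and d="iv q" and s="Suc r"] by (simp add: r_def)
    qed
  qed
  ultimately show ?case by blast
qed


context der
begin

abbreviation "AA \<equiv> linear_part V"

definition lin :: "complex^'n \<Rightarrow> 'n mfps" where
  "lin c = (\<lambda>\<beta>. \<Sum>j\<in>UNIV. c $ j * coord j \<beta>)"

lemma lin_FF1: "lin c \<in> FF 1"
  unfolding FF_def lin_def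
proof (intro CollectI allI impI sum.neutral ballI)
  fix \<beta> :: "'n \<Rightarrow> nat" and j :: 'n assume "deg \<beta> < 1"
  then have "coord j \<beta> = 0" using coord_FF1[of j] unfolding FF_def by blast
  then show "c $ j * coord j \<beta> = 0" by simp
qed

lemma lin_add: "lin (x + y) = (\<lambda>\<beta>. lin x \<beta> + lin y \<beta>)"
  unfolding lin_def by (simp add: distrib_right sum.distrib)
lemma lin_diff: "lin (x - y) = (\<lambda>\<beta>. lin x \<beta> - lin y \<beta>)"
  unfolding lin_def by (simp add: left_diff_distrib sum_subtractf)
lemma lin_zero: "lin 0 = (\<lambda>\<beta>. 0)"
  unfolding lin_def by simp

lemma lin_axis: "lin (axis i 1) = coord i"
proof
  fix \<beta> show "lin (axis i 1) \<beta> = coord i \<beta>"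
  proof -
    have "lin (axis i 1) \<beta> = (\<Sum>j\<in>UNIV. if j = i then coord j \<beta> else 0)"
      unfolding lin_def by (intro sum.cong) (auto simp: axis_def)
    then show ?thesis by simp
  qed
qed

lemma ei_inj: "ei k = ei j \<longleftrightarrow> k = j"
  unfolding ei_def by (auto simp: fun_eq_iff)

lemma coord_ei_val: "coord j (ei k) = (if k = j then 1 else 0)"
  unfolding coord_ei mono_def by (simp add: ei_inj)

lemma deg_one: "deg \<beta> = 1 \<Longrightarrow> \<exists>k. \<beta> = ei k"
proof -
  assume d: "deg \<beta> = 1"
  then obtain k where k: "0 < \<beta> k" using deg_zero_iff by (metis gr0I one_neq_zero)
  have "deg \<beta> = \<beta> k + (\<Sum>i\<in>UNIV - {k}. \<beta> i)" unfolding deg_def by (simp add: sum.remove)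
  then have b1: "\<beta> k = 1" and s0: "(\<Sum>i\<in>UNIV - {k}. \<beta> i) = 0" using d k by linarith+
  have "\<beta> i = 0" if "i \<noteq> k" for i
    using s0 that by (simp add: sum_eq_0_iff)
  then have "\<beta> = ei k" using b1 unfolding ei_def by (intro ext) auto
  then show ?thesis by blast
qed

lemma deg_lt2: "deg \<beta> < 2 \<Longrightarrow> \<beta> = (\<lambda>_. 0) \<or> (\<exists>k. \<beta> = ei k)"
proof -
  assume "deg \<beta> < 2"
  then have "deg \<beta> = 0 \<or> deg \<beta> = 1" by arith
  then show ?thesis using deg_one deg_zero_iff by blast
qed

lemma V_lin: "(\<lambda>\<beta>. V (lin c) \<beta> - lin (c v* AA) \<beta>) \<in> FF 2"
proof -
  have Vl: "V (lin c) = (\<lambda>\<beta>. \<Sum>j\<in>UNIV. c $ j * V (coord j) \<beta>)"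
    unfolding lin_def Vsum Vsc ..
  show ?thesis unfolding FF_def
  proof (intro CollectI allI impI)
    fix \<beta> :: "'n \<Rightarrow> nat" assume "deg \<beta> < 2"
    then consider "\<beta> = (\<lambda>_. 0)" | k where "\<beta> = ei k" using deg_lt2 by blast
    then show "V (lin c) \<beta> - lin (c v* AA) \<beta> = 0"
    proof cases
      case 1
      have c0: "coord j (\<lambda>_. 0) = 0" for j :: 'n
        using coord_FF1[of j] unfolding FF_def deg_def by simp
      have c1: "V (coord j) (\<lambda>_. 0) = 0" for j :: 'n
        using Vm[of "coord j"] c0 by simp
      show ?thesis unfolding Vl 1 using c0 c1 by (simp add: lin_def)
    next
      case 2
      have "V (coord j) (ei k) = AA $ j $ k" for j :: 'n
        unfolding linear_part_def ei_def by simp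
      moreover have "(\<Sum>j\<in>UNIV. (c v* AA) $ j * coord j (ei k)) = (\<Sum>j\<in>UNIV. if j = k then (c v* AA) $ j else 0)"
        by (intro sum.cong) (auto simp: coord_ei_val)
      ultimately show ?thesis unfolding Vl 2
        by (simp add: lin_def vector_matrix_mult_def)
    qed
  qed
qed

lemma FF_eq: "(\<lambda>\<beta>. f \<beta> - g \<beta>) \<in> FF d \<Longrightarrow> (\<lambda>\<beta>. g \<beta> - h \<beta>) \<in> FF d \<Longrightarrow> (\<lambda>\<beta>. f \<beta> - h \<beta>) \<in> FF d"
  unfolding FF_def by auto

lemma W_lin: "(\<lambda>\<beta>. W \<mu> (lin c) \<beta> - lin (Nm AA \<mu> c) \<beta>) \<in> FF 2"
proof -
  have "lin (Nm AA \<mu> c) = (\<lambda>\<beta>. lin (c v* AA) \<beta> - \<mu> * lin c \<beta>)"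
    unfolding Nm_def lin_diff by (simp add: lin_def sum_distrib_left mult.assoc)
  then show ?thesis using V_lin[of c] unfolding W_def FF_def by auto
qed

lemma Wpow_lin: "(\<lambda>\<beta>. (W \<mu> ^^ k) (lin c) \<beta> - lin ((Nm AA \<mu> ^^ k) c) \<beta>) \<in> FF 2"
proof (induction k)
  case 0 then show ?case by (simp add: FF_def)
next
  case (Suc k)
  have "W \<mu> ((W \<mu> ^^ k) (lin c)) = (\<lambda>\<beta>. W \<mu> (\<lambda>\<beta>. (W \<mu> ^^ k) (lin c) \<beta> - lin ((Nm AA \<mu> ^^ k) c) \<beta>) \<beta> + W \<mu> (lin ((Nm AA \<mu> ^^ k) c)) \<beta>)"
    unfolding Wdiff by simp
  moreover have "W \<mu> (\<lambda>\<beta>. (W \<mu> ^^ k) (lin c) \<beta> - lin ((Nm AA \<mu> ^^ k) c) \<beta>) \<in> FF 2"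
    using W_FF[OF Suc.IH] .
  ultimately show ?case using W_lin[of \<mu> "(Nm AA \<mu> ^^ k) c"] unfolding FF_def by auto
qed

fun iterW :: "complex list \<Rightarrow> 'n mfps \<Rightarrow> 'n mfps" where
  "iterW [] f = f"
| "iterW (\<mu>#ms) f = iterW ms (W \<mu> f)"

lemma iterW_FF: "f \<in> FF d \<Longrightarrow> iterW ms f \<in> FF d"
  by (induction ms arbitrary: f) (auto intro: W_FF)
lemma iterW_add: "iterW ms (\<lambda>\<beta>. f \<beta> + g \<beta>) = (\<lambda>\<beta>. iterW ms f \<beta> + iterW ms g \<beta>)"
  by (induction ms arbitrary: f g) (simp_all add: Wadd)
lemma iterW_diff: "iterW ms (\<lambda>\<beta>. f \<beta> - g \<beta>) = (\<lambda>\<beta>. iterW ms f \<beta> - iterW ms g \<beta>)"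
  by (induction ms arbitrary: f g) (simp_all add: Wdiff)
lemma iterW_sc: "iterW ms (\<lambda>\<beta>. c * f \<beta>) = (\<lambda>\<beta>. c * iterW ms f \<beta>)"
  by (induction ms arbitrary: f) (simp_all add: Wsc)
lemma iterW_sum: "iterW ms (\<lambda>\<beta>. \<Sum>x\<in>A. h x \<beta>) = (\<lambda>\<beta>. \<Sum>x\<in>A. iterW ms (h x) \<beta>)"
  by (induction ms arbitrary: h) (simp_all add: Wsum)
lemma iterW_zero: "iterW ms (\<lambda>\<beta>. 0) = (\<lambda>\<beta>. 0)"
  using iterW_sc[of ms 0 "\<lambda>\<beta>. 0"] by simp
lemma iterW_lsum: "iterW ms (\<lambda>\<beta>. sum_list (map (\<lambda>x. h x \<beta>) xs)) = (\<lambda>\<beta>. sum_list (map (\<lambda>x. iterW ms (h x) \<beta>) xs))"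
  by (induction xs) (simp_all add: iterW_add iterW_zero)
lemma iterW_append: "iterW (xs @ ys) f = iterW ys (iterW xs f)"
  by (induction xs arbitrary: f) simp_all
lemma iterW_W: "iterW xs (W \<mu> f) = W \<mu> (iterW xs f)"
proof (induction xs arbitrary: f)
  case (Cons a xs)
  show ?case by (simp only: iterW.simps W_comm[of a \<mu> f] Cons.IH)
qed simp
lemma iterW_Wpow: "iterW xs ((W \<mu> ^^ r) f) = (W \<mu> ^^ r) (iterW xs f)"
  by (induction r) (simp_all add: iterW_W)
lemma iterW_rep: "iterW (replicate r \<mu>) f = (W \<mu> ^^ r) f"
  by (induction r arbitrary: f) (simp_all add: funpow_Suc_right del: funpow.simps)

lemma iterW_lin: "(\<lambda>\<beta>. iterW ms (lin c) \<beta> - lin (iterN AA ms c) \<beta>) \<in> FF 2"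
proof (induction ms arbitrary: c)
  case Nil then show ?case by (simp add: FF_def)
next
  case (Cons \<mu> ms)
  have "iterW (\<mu>#ms) (lin c) = (\<lambda>\<beta>. iterW ms (\<lambda>\<beta>. W \<mu> (lin c) \<beta> - lin (Nm AA \<mu> c) \<beta>) \<beta> + iterW ms (lin (Nm AA \<mu> c)) \<beta>)"
    unfolding iterW_diff by simp
  moreover have "iterW ms (\<lambda>\<beta>. W \<mu> (lin c) \<beta> - lin (Nm AA \<mu> c) \<beta>) \<in> FF 2"
    using iterW_FF[OF W_lin] .
  ultimately show ?case using Cons.IH[of "Nm AA \<mu> c"] unfolding FF_def by auto
qed

end

lemma mult_zero_left: "mfps_mult (\<lambda>\<beta>. 0) f = (\<lambda>\<beta>. 0)"
  unfolding mult_Dn by simp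
lemma mult_zero_right: "mfps_mult f (\<lambda>\<beta>. 0) = (\<lambda>\<beta>. 0)"
  unfolding mult_Dn by simp

lemma mult_lsumL: "mfps_mult (\<lambda>\<beta>. sum_list (map (\<lambda>x. g x \<beta>) xs)) f = (\<lambda>\<beta>. sum_list (map (\<lambda>x. mfps_mult (g x) f \<beta>) xs))"
  by (induction xs) (simp_all add: mult_zero_left mult_add_left)
lemma mult_lsumR: "mfps_mult f (\<lambda>\<beta>. sum_list (map (\<lambda>x. g x \<beta>) xs)) = (\<lambda>\<beta>. sum_list (map (\<lambda>x. mfps_mult f (g x) \<beta>) xs))"
  by (induction xs) (simp_all add: mult_zero_right mult_add_right)
lemma sum_list_concat_map: "sum_list (map F (concat (map G xs))) = sum_list (map (\<lambda>x. sum_list (map F (G x))) xs)"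
  by (induction xs) simp_all
lemma FF_lsum: "(\<And>x. x \<in> set xs \<Longrightarrow> g x \<in> FF d) \<Longrightarrow> (\<lambda>\<beta>. sum_list (map (\<lambda>x. g x \<beta>) xs)) \<in> FF d"
  unfolding FF_def by (induction xs) auto

locale der2 = der V for V :: "'n::finite mfps \<Rightarrow> 'n mfps" +
  fixes ls :: "complex list"
  assumes CHl: "\<And>c. iterN (linear_part V) ls c = 0"
begin

abbreviation "nn \<equiv> length ls"
definition "rr d = d * nn + 1"
definition "SS d = set (map sum_list (List.n_lists d ls))"
definition lsum :: "(complex \<times> 'n mfps) list \<Rightarrow> 'n mfps" where
  "lsum hs = (\<lambda>\<beta>. sum_list (map (\<lambda>h. snd h \<beta>) hs))"

definition GE :: "nat \<Rightarrow> 'n mfps \<Rightarrow> bool" where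
  "GE d f \<longleftrightarrow> f \<in> FF d \<and> (\<exists>hs. (\<lambda>\<beta>. f \<beta> - lsum hs \<beta>) \<in> FF (Suc d) \<and>
     (\<forall>h\<in>set hs. fst h \<in> SS d \<and> snd h \<in> FF d \<and> (W (fst h) ^^ rr d) (snd h) \<in> FF (Suc d)))"

lemma lin_lsum: "lin (sum_list (map g xs)) = (\<lambda>\<beta>. sum_list (map (\<lambda>x. lin (g x) \<beta>) xs))"
  by (induction xs) (simp_all add: lin_add lin_zero)

lemma coord_pieces: "\<exists>ps. coord i = (\<lambda>\<beta>. sum_list (map (\<lambda>p. lin (snd p) \<beta>) ps)) \<and>
   (\<forall>p\<in>set ps. fst p \<in> set ls \<and> (W (fst p) ^^ nn) (lin (snd p)) \<in> FF 2)"
proof -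
  obtain ps where ps: "axis i 1 = sum_list (map snd ps)"
    "\<forall>p\<in>set ps. fst p \<in> set ls \<and> (Nm AA (fst p) ^^ nn) (snd p) = 0"
    using decomp[OF CHl[of "axis i 1"]] by blast
  have "coord i = (\<lambda>\<beta>. sum_list (map (\<lambda>p. lin (snd p) \<beta>) ps))"
    using lin_lsum[of snd ps] ps(1) lin_axis[of i] by simp
  moreover have "(W (fst p) ^^ nn) (lin (snd p)) \<in> FF 2" if "p \<in> set ps" for p
    using Wpow_lin[where \<mu>="fst p" and k=nn and c="snd p"] ps(2) that by (simp add: lin_zero)
  ultimately show ?thesis using ps(2) by blast
qed

lemma GE_zero: "GE 0 (mono (\<lambda>_. 0))"
  unfolding GE_def
proof (intro conjI exI[of _ "[(0, mono (\<lambda>_. 0))]"])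
  show "(\<lambda>\<beta>. mono (\<lambda>_. 0) \<beta> - lsum [(0, mono (\<lambda>_. 0))] \<beta>) \<in> FF (Suc 0)"
    by (simp add: lsum_def)
  have "W 0 (mono (\<lambda>_. 0)) = (\<lambda>\<beta>. 0)" unfolding W_def V_mono0 by simp
  then show "\<forall>h\<in>set [(0, mono (\<lambda>_. 0))]. fst h \<in> SS 0 \<and> snd h \<in> FF 0 \<and> (W (fst h) ^^ rr 0) (snd h) \<in> FF (Suc 0)"
    by (simp add: SS_def rr_def)
qed simp

lemma GE_Suc:
  assumes "GE d f"
  shows "GE (Suc d) (mfps_mult (coord i) f)"
proof -
  obtain hs where hs: "(\<lambda>\<beta>. f \<beta> - lsum hs \<beta>) \<in> FF (Suc d)"
    "\<And>h. h \<in> set hs \<Longrightarrow> fst h \<in> SS d \<and> snd h \<in> FF d \<and> (W (fst h) ^^ rr d) (snd h) \<in> FF (Suc d)"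
    and f: "f \<in> FF d" using assms unfolding GE_def by blast
  obtain ps where ps: "coord i = (\<lambda>\<beta>. sum_list (map (\<lambda>p. lin (snd p) \<beta>) ps))"
    "\<And>p. p \<in> set ps \<Longrightarrow> fst p \<in> set ls \<and> (W (fst p) ^^ nn) (lin (snd p)) \<in> FF 2"
    using coord_pieces[of i] by blast
  define R where "R = (\<lambda>\<beta>. f \<beta> - lsum hs \<beta>)"
  have fR: "f = (\<lambda>\<beta>. lsum hs \<beta> + R \<beta>)" unfolding R_def by simp
  define prs where "prs = concat (map (\<lambda>p. map (\<lambda>h. (fst p + fst h, mfps_mult (lin (snd p)) (snd h))) hs) ps)"
  have e1: "mfps_mult (coord i) f = (\<lambda>\<beta>. sum_list (map (\<lambda>p. mfps_mult (lin (snd p)) f \<beta>) ps))"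
    unfolding ps(1) mult_lsumL ..
  have e2: "mfps_mult (lin (snd p)) f = (\<lambda>\<beta>. sum_list (map (\<lambda>h. mfps_mult (lin (snd p)) (snd h) \<beta>) hs) + mfps_mult (lin (snd p)) R \<beta>)" for p
    by (subst fR) (simp add: mult_add_right lsum_def mult_lsumR)
  have e3: "lsum prs = (\<lambda>\<beta>. sum_list (map (\<lambda>p. sum_list (map (\<lambda>h. mfps_mult (lin (snd p)) (snd h) \<beta>) hs)) ps))"
    unfolding lsum_def prs_def by (simp add: sum_list_concat_map comp_def)
  have "(\<lambda>\<beta>. mfps_mult (coord i) f \<beta> - lsum prs \<beta>) = (\<lambda>\<beta>. sum_list (map (\<lambda>p. mfps_mult (lin (snd p)) R \<beta>) ps))"
    unfolding e1 e2 e3 by (simp add: sum_list_addf)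
  also have "\<dots> \<in> FF (Suc (Suc d))"
    using FF_mult[OF lin_FF1 hs(1)[folded R_def]] by (intro FF_lsum) simp
  finally have r: "(\<lambda>\<beta>. mfps_mult (coord i) f \<beta> - lsum prs \<beta>) \<in> FF (Suc (Suc d))" .
  have pcs: "fst q \<in> SS (Suc d) \<and> snd q \<in> FF (Suc d) \<and> (W (fst q) ^^ rr (Suc d)) (snd q) \<in> FF (Suc (Suc d))"
    if q_in: "q \<in> set prs" for q
  proof -
    obtain p h where p: "p \<in> set ps" and h: "h \<in> set hs"
      and q: "q = (fst p + fst h, mfps_mult (lin (snd p)) (snd h))"
    proof -
      have "\<exists>p\<in>set ps. \<exists>h\<in>set hs. q = (fst p + fst h, mfps_mult (lin (snd p)) (snd h))"
        using q_in unfolding prs_def by auto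
      then show ?thesis using that by blast
    qed
    from hs(2)[OF h] obtain xs where xs: "xs \<in> set (List.n_lists d ls)" "fst h = sum_list xs"
      unfolding SS_def by auto
    have "fst p # xs \<in> set (List.n_lists (Suc d) ls)" using xs(1) ps(2)[OF p] unfolding set_n_lists by simp
    then have "fst q \<in> SS (Suc d)" unfolding SS_def q using xs(2)
      by (auto intro!: image_eqI[where x="fst p # xs"])
    moreover have "snd q \<in> FF (Suc d)" unfolding q using FF_mult[OF lin_FF1] hs(2)[OF h] by simp
    moreover have "(W (fst q) ^^ rr (Suc d)) (snd q) \<in> FF (Suc (Suc d))"
    proof -
      have "(W (fst p + fst h) ^^ (nn + rr d)) (mfps_mult (lin (snd p)) (snd h)) \<in> FF (Suc (1 + d))"
        using ps(2)[OF p] hs(2)[OF h]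
        by (intro prod_gen[where m=nn and p="rr d"] lin_FF1) (auto simp: numeral_2_eq_2)
      moreover have "nn + rr d = rr (Suc d)" unfolding rr_def by simp
      ultimately show ?thesis unfolding q by simp
    qed
    ultimately show ?thesis by blast
  qed
  have "mfps_mult (coord i) f \<in> FF (Suc d)"
    using FF_mult[OF coord_FF1 f] by simp
  then show ?thesis unfolding GE_def using r pcs by blast
qed

lemma GE_mono: "GE (deg \<gamma>) (mono \<gamma>)"
proof (induction "deg \<gamma>" arbitrary: \<gamma>)
  case 0
  then have "\<gamma> = (\<lambda>_. 0)" using deg_zero_iff by metis
  then show ?case using GE_zero by (simp add: deg_def)
next
  case (Suc n)
  then obtain i where i: "0 < \<gamma> i" using deg_zero_iff by (metis gr0I nat.distinct(1))
  define \<gamma>' where "\<gamma>' = \<gamma>(i := \<gamma> i - 1)"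
  have d: "deg \<gamma>' = n" unfolding \<gamma>'_def using deg_dec[of \<gamma> i, OF i] Suc(2) by simp
  have g: "\<gamma> = \<gamma>'(i := Suc (\<gamma>' i))" unfolding \<gamma>'_def using i by auto
  have "GE (Suc (deg \<gamma>')) (mfps_mult (coord i) (mono \<gamma>'))"
    using GE_Suc Suc.hyps(1)[OF d[symmetric]] by blast
  then show ?case unfolding mono_Suc[symmetric] using g d Suc(2) by simp
qed

end

lemma MS_sum_list: "set xs \<subseteq> range lam \<Longrightarrow> sum_list xs \<in> MS (lam :: 'n::finite \<Rightarrow> complex)"
proof (induction xs)
  case Nil
  show ?case unfolding MS_def by (rule CollectI, rule exI[of _ "\<lambda>_. 0"]) simp
next
  case (Cons x xs)
  then obtain \<gamma> where g: "sum_list xs = (\<Sum>i\<in>UNIV. of_nat (\<gamma> i) * lam i)" unfolding MS_def by auto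
  from Cons.prems obtain j where j: "x = lam j" by auto
  define \<gamma>' where "\<gamma>' = (\<lambda>i. \<gamma> i + (if i = j then 1 else 0))"
  have "(\<Sum>i\<in>UNIV. of_nat (\<gamma>' i) * lam i) = (\<Sum>i\<in>UNIV. of_nat (\<gamma> i) * lam i) + (\<Sum>i\<in>UNIV. if i = j then lam i else 0)"
  proof -
    have "of_nat (\<gamma>' i) * lam i = of_nat (\<gamma> i) * lam i + (if i = j then lam i else 0)" for i
      unfolding \<gamma>'_def by (auto simp: distrib_right)
    then show ?thesis by (simp add: sum.distrib)
  qed
  also have "\<dots> = sum_list (x # xs)" using g j by simp
  finally show ?case unfolding MS_def by (intro CollectI exI[of _ \<gamma>']) simp
qed

context der
begin

lemma Vpow_lin: "(V ^^ k) (\<lambda>\<beta>. f \<beta> - \<mu> * g \<beta>) = (\<lambda>\<beta>. (V ^^ k) f \<beta> - \<mu> * (V ^^ k) g \<beta>)"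
proof (induction k)
  case (Suc k)
  have "(V ^^ Suc k) (\<lambda>\<beta>. f \<beta> - \<mu> * g \<beta>) = V (\<lambda>\<beta>. (V ^^ k) f \<beta> - (\<lambda>\<beta>. \<mu> * (V ^^ k) g \<beta>) \<beta>)"
    using Suc by simp
  also have "\<dots> = (\<lambda>\<beta>. (V ^^ Suc k) f \<beta> - \<mu> * (V ^^ Suc k) g \<beta>)" unfolding Vdiff Vsc by simp
  finally show ?case .
qed simp

lemma Vpow_FF: "f \<in> FF d \<Longrightarrow> (V ^^ k) f \<in> FF d"
  by (induction k) (auto intro: V_FF)

lemma sh_V: "sh \<mu> (\<lambda>k. (V ^^ k) f \<beta>) = (\<lambda>k. (V ^^ k) (W \<mu> f) \<beta>)"
  unfolding sh_def W_def Vpow_lin by (simp add: funpow_Suc_right del: funpow.simps)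

lemma iter_sh_V: "iter_sh ms (\<lambda>k. (V ^^ k) f \<beta>) = (\<lambda>k. (V ^^ k) (iterW ms f) \<beta>)"
  by (induction ms arbitrary: f) (simp_all add: sh_V)

end

context der2
begin

definition "msd d = concat (map (\<lambda>\<mu>. replicate (rr d) \<mu>) (map sum_list (List.n_lists d ls)))"

lemma GE_kill: assumes "GE d f" shows "iterW (msd d) f \<in> FF (Suc d)"
proof -
  obtain hs where hs: "(\<lambda>\<beta>. f \<beta> - lsum hs \<beta>) \<in> FF (Suc d)"
    "\<And>h. h \<in> set hs \<Longrightarrow> fst h \<in> SS d \<and> snd h \<in> FF d \<and> (W (fst h) ^^ rr d) (snd h) \<in> FF (Suc d)"
    using assms unfolding GE_def by blast
  define R where "R = (\<lambda>\<beta>. f \<beta> - lsum hs \<beta>)"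
  have fR: "f = (\<lambda>\<beta>. lsum hs \<beta> + R \<beta>)" unfolding R_def by simp
  have p: "iterW (msd d) (snd h) \<in> FF (Suc d)" if h: "h \<in> set hs" for h
  proof -
    have "fst h \<in> set (map sum_list (List.n_lists d ls))" using hs(2)[OF h] unfolding SS_def by blast
    then obtain a b where ab: "map sum_list (List.n_lists d ls) = a @ fst h # b" by (meson split_list)
    define g where "g = (\<lambda>\<mu>::complex. replicate (rr d) \<mu>)"
    have "msd d = concat (map g a) @ replicate (rr d) (fst h) @ concat (map g b)"
      unfolding msd_def ab g_def by simp
    then have "iterW (msd d) (snd h) = iterW (concat (map g b)) (iterW (concat (map g a)) ((W (fst h) ^^ rr d) (snd h)))"
      by (simp add: iterW_append iterW_rep iterW_Wpow)
    then show ?thesis using hs(2)[OF h] by (simp add: iterW_FF)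
  qed
  have "iterW (msd d) f = (\<lambda>\<beta>. sum_list (map (\<lambda>h. iterW (msd d) (snd h) \<beta>) hs) + iterW (msd d) R \<beta>)"
    by (subst fR) (simp add: iterW_add lsum_def iterW_lsum)
  also have "\<dots> \<in> FF (Suc d)"
    using p iterW_FF[OF hs(1)[folded R_def]] by (intro FF_add FF_lsum) auto
  finally show ?thesis .
qed

lemma finite_deg: "finite {\<gamma>::'n \<Rightarrow> nat. deg \<gamma> = d}"
proof (rule finite_subset[OF _ finite_Dn[of "\<lambda>_. d"]])
  show "{\<gamma>::'n \<Rightarrow> nat. deg \<gamma> = d} \<subseteq> Dn (\<lambda>_. d)"
    unfolding Dn_def deg_def by (auto intro: member_le_sum)
qed

lemma FF_split: assumes "f \<in> FF d"
  shows "(\<lambda>\<beta>. f \<beta> - (\<Sum>\<gamma>\<in>{\<gamma>::'n \<Rightarrow> nat. deg \<gamma> = d}. f \<gamma> * mono \<gamma> \<beta>)) \<in> FF (Suc d)"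
  unfolding FF_def
proof (intro CollectI allI impI)
  fix \<beta> :: "'n \<Rightarrow> nat" assume b: "deg \<beta> < Suc d"
  have "(\<Sum>\<gamma>\<in>{\<gamma>::'n \<Rightarrow> nat. deg \<gamma> = d}. f \<gamma> * mono \<gamma> \<beta>) = (\<Sum>\<gamma>\<in>{\<gamma>::'n \<Rightarrow> nat. deg \<gamma> = d}. if \<gamma> = \<beta> then f \<gamma> else 0)"
    by (intro sum.cong) (auto simp: mono_def)
  also have "\<dots> = (if deg \<beta> = d then f \<beta> else 0)" using finite_deg[of d] by (simp add: sum.delta')
  finally show "f \<beta> - (\<Sum>\<gamma>\<in>{\<gamma>::'n \<Rightarrow> nat. deg \<gamma> = d}. f \<gamma> * mono \<gamma> \<beta>) = 0"
    using assms b unfolding FF_def by auto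
qed

lemma kill_all: assumes "f \<in> FF d" shows "iterW (msd d) f \<in> FF (Suc d)"
proof -
  define S where "S = (\<lambda>\<beta>. \<Sum>\<gamma>\<in>{\<gamma>::'n \<Rightarrow> nat. deg \<gamma> = d}. (\<lambda>\<beta>. f \<gamma> * mono \<gamma> \<beta>) \<beta>)"
  have fS: "f = (\<lambda>\<beta>. (\<lambda>\<beta>. f \<beta> - S \<beta>) \<beta> + S \<beta>)" by simp
  have "iterW (msd d) S = (\<lambda>\<beta>. \<Sum>\<gamma>\<in>{\<gamma>. deg \<gamma> = d}. f \<gamma> * iterW (msd d) (mono \<gamma>) \<beta>)"
    unfolding S_def iterW_sum iterW_sc ..
  also have "\<dots> \<in> FF (Suc d)"
  proof (intro FF_sum FF_sc)
    fix \<gamma> :: "'n \<Rightarrow> nat" assume "\<gamma> \<in> {\<gamma>. deg \<gamma> = d}"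
    then show "iterW (msd d) (mono \<gamma>) \<in> FF (Suc d)" using GE_kill[OF GE_mono[of \<gamma>]] by simp
  qed
  finally have 1: "iterW (msd d) S \<in> FF (Suc d)" .
  have 2: "iterW (msd d) (\<lambda>\<beta>. f \<beta> - S \<beta>) \<in> FF (Suc d)"
    using FF_split[OF assms] unfolding S_def by (intro iterW_FF) simp
  show ?thesis by (subst fS) (simp only: iterW_add, rule FF_add[OF 2 1])
qed

definition "msAll N = concat (map msd [0..<Suc N])"

lemma kill_N: "iterW (msAll N) f \<in> FF (Suc N)"
proof (induction N arbitrary: f)
  case 0 then show ?case using kill_all[of f 0] by (simp add: msAll_def)
next
  case (Suc N)
  have "msAll (Suc N) = msAll N @ msd (Suc N)" unfolding msAll_def by simp
  then show ?case using kill_all[OF Suc.IH] by (simp add: iterW_append)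
qed

lemma msAll_set: "x \<in> set (msAll N) \<Longrightarrow> \<exists>xs. set xs \<subseteq> set ls \<and> x = sum_list xs"
  unfolding msAll_def msd_def by (auto simp: set_n_lists)

lemma seq_Sp:
  assumes "set ls \<subseteq> range lam"
  shows "(\<lambda>k. (V ^^ k) (mono \<alpha>) \<beta>) \<in> Sp (MS lam)"
proof (rule iter_sh_Sp)
  show "set (msAll (deg \<beta>)) \<subseteq> MS lam"
    using msAll_set MS_sum_list assms by (metis subsetI subset_trans)
  have "(V ^^ k) (iterW (msAll (deg \<beta>)) (mono \<alpha>)) \<in> FF (Suc (deg \<beta>))" for k
    by (intro Vpow_FF kill_N)
  then show "iter_sh (msAll (deg \<beta>)) (\<lambda>k. (V ^^ k) (mono \<alpha>) \<beta>) = (\<lambda>_. 0)"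
    unfolding iter_sh_V FF_def by auto
qed

end

theorem lemma3p3:
  fixes V :: "'n::finite mfps \<Rightarrow> 'n mfps"
    and lam :: "'n \<Rightarrow> complex"
    and \<alpha> \<beta> :: "'n \<Rightarrow> nat"
  assumes "is_der0 V"
    and "charpoly_cart (linear_part V) = (\<Prod>i\<in>UNIV. [:- lam i, 1:])"
  shows "mat_coeff V \<alpha> \<beta> \<in> exp_poly_ring lam"
proof -
  obtain xs :: "'n list" where xs: "set xs = UNIV" "distinct xs"
    using finite_distinct_list[of "UNIV :: 'n set"] by auto
  define ls where "ls = rev (map lam xs)"
  have "(\<Prod>i\<in>UNIV. [:- lam i, 1:]) = (\<Prod>i\<in>set xs. [:- lam i, 1:])" using xs(1) by simp
  also have "\<dots> = prod_list (map (\<lambda>i. [:- lam i, 1:]) xs)" by (rule prod.distinct_set_conv_list[OF xs(2)])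
  finally have "charpoly_cart (linear_part V) = prod_list (map (\<lambda>\<mu>. [:-\<mu>, 1:]) (map lam xs))"
    using assms(2) by (simp add: comp_def)
  note CP = this
  have CHl: "iterN (linear_part V) ls c = 0" for c
  proof -
    have "Pe (linear_part V) (charpoly_cart (linear_part V)) c = 0" using CH unfolding charpoly_Mx .
    then show ?thesis unfolding CP Pe_prod ls_def .
  qed
  interpret der2 V ls
    by unfold_locales (use assms(1) CHl in auto)
  have "set ls \<subseteq> range lam" unfolding ls_def by auto
  from seq_Sp[OF this, of \<alpha> \<beta>] have "(\<lambda>k. (V ^^ k) (mono \<alpha>) \<beta>) \<in> Sp (MS lam)" .
  from Sp_egf[OF this] have "(\<lambda>t. \<Sum>k. complex_of_real t ^ k / of_nat (fact k) * (V ^^ k) (mono \<alpha>) \<beta>) \<in> exp_poly_ring lam"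
    by simp
  moreover have "mat_coeff V \<alpha> \<beta> = (\<lambda>t. \<Sum>k. complex_of_real t ^ k / of_nat (fact k) * (V ^^ k) (mono \<alpha>) \<beta>)"
    unfolding mat_coeff_def ..
  ultimately show ?thesis by simp
qed


end
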